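(* In the lattice vertex operator algebra $V_Q$ of the $E_6$ root lattice (setting below), let $\omega_{E_6}=\frac12\sum_{i=1}^6\alpha_i(-1)\lambda_i(-1)(1\otimes e^0)$ and let $\omega_{F_4}=\frac1{20}\sum_iu_i(-1)u^i(-1)(1\otimes e^0)$ be the Sugawara vector of the $F_4$ subalgebra $\mathfrak a$. Then the coset vector $\omega=\omega_{E_6}-\omega_{F_4}$ is $$\begin{aligned}\omega=&\tfrac1{10}\big[(-\lambda_1+\lambda_6)(-1)^2+(\lambda_3-\lambda_5)(-1)^2+(\lambda_1-\lambda_3+\lambda_5-\lambda_6)(-1)^2\big]\otimes e^0\\&+\tfrac15\big(-1\otimes e^{\alpha_1-\alpha_6}-1\otimes e^{\alpha_3-\alpha_5}+1\otimes e^{\alpha_1+\alpha_3-\alpha_5-\alpha_6}\big)\\&+\tfrac15\big(-1\otimes e^{-\alpha_1+\alpha_6}-1\otimes e^{-\alpha_3+\alpha_5}+1\otimes e^{-\alpha_1-\alpha_3+\alpha_5+\alpha_6}\big).\end{aligned}$$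
   Context: Setting. $Q$ is the root lattice of $E_6$ with simple roots $\alpha_1,\dots,\alpha_6$ labelled so that the Dynkin diagram is the chain $\alpha_1-\alpha_3-\alpha_4-\alpha_5-\alpha_6$ with $\alpha_2$ attached to $\alpha_4$; $\langle\cdot,\cdot\rangle$ is given by the Cartan matrix. $\lambda_i$ are the fundamental weights ($\langle\lambda_i,\alpha_j\rangle=\delta_{ij}$), $P=\bigoplus\mathbb Z\lambda_i$, $\mathfrak h=\mathbb C\otimes P$, $\Phi=\{\alpha\in Q:\langle\alpha,\alpha\rangle=2\}$. $\varepsilon:P\times P\to\{\pm1\}$ is bimultiplicative with $[\varepsilon(\lambda_i,\lambda_j)]$ having rows $(1,1,1,1,1,1)$, $(-1,1,1,1,1,-1)$, $(-1,1,1,1,1,1)$, $(1,-1,1,1,1,1)$, $(1,1,1,1,1,-1)$, $(1,1,1,1,1,1)$. $V_Q=S(\hat{\mathfrak h}^-)\otimes\mathbb C[Q]$ with Heisenberg operators $h(n)$ ($[h(m),h'(n)]=m\langle h,h'\rangle\delta_{m+n,0}$, $h(n)1=0$ for $n>0$, $h(0)(u\otimes e^\beta)=\langle h,\beta\rangle u\otimes e^\beta$) and $Y(1\otimes e^\alpha,z)=\exp(\sum_{k\ge1}\frac{\alpha(-k)}kz^k)\exp(-\sum_{k\ge1}\frac{\alpha(k)}kz^{-k})e_\alpha z^{\alpha(0)}=\sum_n\{1\otimes e^\alpha\}_nz^{-n-1}$, $e_\alpha(u\otimes e^\beta)=\varepsilon(\alpha,\beta)u\otimes e^{\alpha+\beta}$,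 $z^{\alpha(0)}(u\otimes e^\beta)=z^{\langle\alpha,\beta\rangle}u\otimes e^\beta$. $\mathfrak g=\mathfrak h\oplus\bigoplus_{\alpha\in\Phi}\mathbb Cx_\alpha$ (type $E_6$) has invariant form $\langle x_\alpha,x_\beta\rangle=\varepsilon(\alpha,-\alpha)\delta_{\alpha+\beta,0}$, $\langle\mathfrak h,x_\alpha\rangle=0$; $x(n)$ for $x\in\mathfrak g$ acts by $h(n)$ for $h\in\mathfrak h$ and $x_\alpha(n)=\{1\otimes e^\alpha\}_n$. $\tau$ is the diagram automorphism $\alpha_1\leftrightarrow\alpha_6$, $\alpha_3\leftrightarrow\alpha_5$, acting on $\mathfrak g$ linearly on $\mathfrak h$ and by $x_\alpha\mapsto x_{\tau\alpha}$; $\mathfrak a$ (type $F_4$) is the $\tau$-fixed subalgebra, with basis $\alpha_2,\alpha_4,\alpha_3+\alpha_5,\alpha_1+\alpha_6\in\mathfrak h$, $x_\alpha$ ($\tau\alpha=\alpha$), $x_\alpha+x_{\tau\alpha}$ ($\tau\alpha\ne\alpha$). $\{u_i\}$ is a basis of $\mathfrak a$, $\{u^i\}$ its dual basis with respect to $\langle\cdot,\cdot\rangle|_{\mathfrak a}$. *)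

theory Defs
  imports Complex_Main "HOL-Library.Poly_Mapping" "HOL-Library.Function_Algebras"
begin

text \<open>Simple roots alpha_1..alpha_6 of E6, labelled so that the Dynkin diagram is the
chain 1-3-4-5-6 with 2 attached to 4.\<close>

datatype idx = I1 | I2 | I3 | I4 | I5 | I6

definition idxs :: "idx set" where "idxs = {I1, I2, I3, I4, I5, I6}"

definition adj :: "idx \<Rightarrow> idx \<Rightarrow> bool" where
  "adj i j \<longleftrightarrow> {i, j} \<in> {{I1, I3}, {I3, I4}, {I4, I5}, {I5, I6}, {I2, I4}}"

definition cartan :: "idx \<Rightarrow> idx \<Rightarrow> int" where
  "cartan i j = (if i = j then 2 else if adj i j then -1 else 0)"

text \<open>Root lattice Q: elements are integer coordinate vectors w.r.t. the simple roots.\<close>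
type_synonym rlat = "idx \<Rightarrow> int"

text \<open>h = C tensor P = C tensor Q: complex coordinate vectors w.r.t. the simple roots.\<close>
type_synonym hvec = "idx \<Rightarrow> complex"

definition lform :: "rlat \<Rightarrow> rlat \<Rightarrow> int" where
  "lform a b = (\<Sum>i\<in>idxs. \<Sum>j\<in>idxs. a i * cartan i j * b j)"

definition hform :: "hvec \<Rightarrow> hvec \<Rightarrow> complex" where
  "hform h h' = (\<Sum>i\<in>idxs. \<Sum>j\<in>idxs. h i * of_int (cartan i j) * h' j)"

definition alphaQ :: "idx \<Rightarrow> rlat" where "alphaQ i = (\<lambda>j. if j = i then 1 else 0)"

definition toH :: "rlat \<Rightarrow> hvec" where "toH a = (\<lambda>i. of_int (a i))"

definition alphaH :: "idx \<Rightarrow> hvec" where "alphaH i = toH (alphaQ i)"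

definition lam :: "idx \<Rightarrow> hvec" where
  "lam i = (THE h. \<forall>j\<in>idxs. hform h (alphaH j) = (if j = i then 1 else 0))"

definition Phi :: "rlat set" where "Phi = {a. lform a a = 2}"

text \<open>Weight lattice P: integer coordinate vectors w.r.t. the fundamental weights.
  Q is embedded into P via alpha_j = sum_i <alpha_i,alpha_j> lambda_i.\<close>
type_synonym wlat = "idx \<Rightarrow> int"

definition QtoP :: "rlat \<Rightarrow> wlat" where
  "QtoP a = (\<lambda>i. \<Sum>j\<in>idxs. cartan i j * a j)"

text \<open>Matrix [epsilon(lambda_i, lambda_j)]; entries -1 at (2,1),(2,6),(3,1),(4,2),(5,6).\<close>
definition epsneg :: "idx \<Rightarrow> idx \<Rightarrow> bool" where
  "epsneg i j \<longleftrightarrow> (i, j) \<in> {(I2, I1), (I2, I6), (I3, I1), (I4, I2), (I5, I6)}"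

definition epsP :: "wlat \<Rightarrow> wlat \<Rightarrow> int" where
  "epsP a b = (\<Prod>i\<in>idxs. \<Prod>j\<in>idxs.
      (if epsneg i j \<and> odd (a i * b j) then -1 else 1))"

definition epsQ :: "rlat \<Rightarrow> rlat \<Rightarrow> int" where "epsQ a b = epsP (QtoP a) (QtoP b)"

text \<open>S(h^-) is the polynomial algebra in the variables alpha_i(-k-1), i in idxs, k :: nat;
  the variable alpha_i(-k-1) is indexed by (i,k).\<close>
type_synonym mono = "(idx \<times> nat) \<Rightarrow>\<^sub>0 nat"
type_synonym fock = "mono \<Rightarrow>\<^sub>0 complex"

text \<open>V_Q = S(h^-) tensor C[Q]: finitely supported maps Q -> S(h^-); u tensor e^beta is
  Poly_Mapping.single beta u.\<close>
type_synonym VQ = "rlat \<Rightarrow>\<^sub>0 fock"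

definition pconst :: "complex \<Rightarrow> fock" where "pconst c = Poly_Mapping.single 0 c"

definition pvar :: "idx \<times> nat \<Rightarrow> fock" where
  "pvar v = Poly_Mapping.single (Poly_Mapping.single v 1) 1"

definition pderiv_var :: "idx \<times> nat \<Rightarrow> fock \<Rightarrow> fock" where
  "pderiv_var v p = (\<Sum>m\<in>Poly_Mapping.keys p.
      Poly_Mapping.single (m - Poly_Mapping.single v 1)
        (of_nat (Poly_Mapping.lookup m v) * Poly_Mapping.lookup p m))"

definition hmul :: "hvec \<Rightarrow> nat \<Rightarrow> fock \<Rightarrow> fock" where
  "hmul h n p = (\<Sum>i\<in>idxs. pconst (h i) * pvar (i, n - 1)) * p"

text \<open>h(n), n >= 1, acting on S(h^-) as the derivation with h(n) alpha_i(-m) = n <h,alpha_i> delta_nm.\<close>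
definition hder :: "hvec \<Rightarrow> nat \<Rightarrow> fock \<Rightarrow> fock" where
  "hder h n p = (\<Sum>i\<in>idxs. pconst (of_nat n * hform h (alphaH i)) * pderiv_var (i, n - 1) p)"

definition vmap :: "(rlat \<Rightarrow> fock \<Rightarrow> fock) \<Rightarrow> VQ \<Rightarrow> VQ" where
  "vmap F v = (\<Sum>b\<in>Poly_Mapping.keys v. Poly_Mapping.single b (F b (Poly_Mapping.lookup v b)))"

definition vscale :: "complex \<Rightarrow> VQ \<Rightarrow> VQ" where
  "vscale c v = vmap (\<lambda>_ p. pconst c * p) v"

definition tens :: "fock \<Rightarrow> rlat \<Rightarrow> VQ" where "tens u b = Poly_Mapping.single b u"

definition vac :: VQ where "vac = tens 1 0"

definition heis :: "hvec \<Rightarrow> int \<Rightarrow> VQ \<Rightarrow> VQ" where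
  "heis h n v =
     (if n < 0 then vmap (\<lambda>_ p. hmul h (nat (- n)) p) v
      else if n = 0 then vmap (\<lambda>b p. pconst (hform h (toH b)) * p) v
      else vmap (\<lambda>_ p. hder h (nat n) p) v)"

text \<open>Coefficients of the exponentials of commuting operators:
  exp(sum_{k>=1} alpha(-k)/k z^k) = sum_i Em_i z^i and
  exp(- sum_{k>=1} alpha(k)/k z^(-k)) = sum_j Ep_j z^(-j),
  computed by the recursion i E_i = sum_{k=1}^i k a_k E_(i-k) for E = exp(sum a_k z^k).\<close>
primrec Emlist :: "hvec \<Rightarrow> nat \<Rightarrow> (fock \<Rightarrow> fock) list" where
  "Emlist h 0 = [id]"
| "Emlist h (Suc i) = Emlist h i @
     [\<lambda>p. pconst (1 / of_nat (Suc i)) *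
          (\<Sum>k\<in>{1..Suc i}. hmul h k ((Emlist h i ! (Suc i - k)) p))]"

primrec Eplist :: "hvec \<Rightarrow> nat \<Rightarrow> (fock \<Rightarrow> fock) list" where
  "Eplist h 0 = [id]"
| "Eplist h (Suc i) = Eplist h i @
     [\<lambda>p. pconst (1 / of_nat (Suc i)) *
          (\<Sum>k\<in>{1..Suc i}. - hder h k ((Eplist h i ! (Suc i - k)) p))]"

definition Em :: "hvec \<Rightarrow> int \<Rightarrow> fock \<Rightarrow> fock" where
  "Em h i p = (if i < 0 then 0 else (Emlist h (nat i) ! nat i) p)"

definition Ep :: "hvec \<Rightarrow> nat \<Rightarrow> fock \<Rightarrow> fock" where
  "Ep h j p = (Eplist h j ! j) p"

text \<open>Upper bound for the weight of a polynomial; Ep_j vanishes on it for larger j.\<close>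
definition wtb :: "fock \<Rightarrow> nat" where
  "wtb p = (\<Sum>m\<in>Poly_Mapping.keys p. \<Sum>v\<in>Poly_Mapping.keys m. Poly_Mapping.lookup m v * (snd v + 1))"

text \<open>The mode {1 tensor e^alpha}_n, i.e. the coefficient of z^(-n-1) in
  Y(1 tensor e^alpha, z) = E^-(z) E^+(z) e_alpha z^(alpha(0)).\<close>
definition emode :: "rlat \<Rightarrow> int \<Rightarrow> VQ \<Rightarrow> VQ" where
  "emode a n v = (\<Sum>b\<in>Poly_Mapping.keys v. Poly_Mapping.single (a + b)
      (pconst (of_int (epsQ a b)) *
        (\<Sum>j\<in>{0..wtb (Poly_Mapping.lookup v b)}.
           Em (toH a) (int j - n - 1 - lform a b) (Ep (toH a) j (Poly_Mapping.lookup v b)))))"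

text \<open>An element x of g = h + sum_{alpha in Phi} C x_alpha is given by its coordinates:
  x (Inl i) is the coefficient of alpha_i in the h-part, x (Inr alpha) the coefficient of x_alpha.\<close>
type_synonym gel = "(idx + rlat) \<Rightarrow> complex"

definition in_g :: "gel \<Rightarrow> bool" where
  "in_g x \<longleftrightarrow> (\<forall>a. a \<notin> Phi \<longrightarrow> x (Inr a) = 0)"

definition hpart :: "gel \<Rightarrow> hvec" where "hpart x = (\<lambda>i. x (Inl i))"

definition gform :: "gel \<Rightarrow> gel \<Rightarrow> complex" where
  "gform x y = hform (hpart x) (hpart y)
     + (\<Sum>a\<in>Phi. x (Inr a) * y (Inr (- a)) * of_int (epsQ a (- a)))"

definition gmode :: "gel \<Rightarrow> int \<Rightarrow> VQ \<Rightarrow> VQ" where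
  "gmode x n v = heis (hpart x) n v + (\<Sum>a\<in>Phi. vscale (x (Inr a)) (emode a n v))"

definition tauI :: "idx \<Rightarrow> idx" where
  "tauI i = (case i of I1 \<Rightarrow> I6 | I6 \<Rightarrow> I1 | I3 \<Rightarrow> I5 | I5 \<Rightarrow> I3 | _ \<Rightarrow> i)"

definition tauQ :: "rlat \<Rightarrow> rlat" where "tauQ a = (\<lambda>i. a (tauI i))"

definition tauG :: "gel \<Rightarrow> gel" where
  "tauG x = (\<lambda>k. case k of Inl i \<Rightarrow> x (Inl (tauI i)) | Inr a \<Rightarrow> x (Inr (tauQ a)))"

definition in_a :: "gel \<Rightarrow> bool" where "in_a x \<longleftrightarrow> in_g x \<and> tauG x = x"

definition gsmult :: "complex \<Rightarrow> gel \<Rightarrow> gel" where "gsmult c x = (\<lambda>k. c * x k)"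

definition is_basis_a :: "nat \<Rightarrow> (nat \<Rightarrow> gel) \<Rightarrow> bool" where
  "is_basis_a d u \<longleftrightarrow> (\<forall>i<d. in_a (u i))
     \<and> (\<forall>c. (\<Sum>i<d. gsmult (c i) (u i)) = 0 \<longrightarrow> (\<forall>i<d. c i = 0))
     \<and> (\<forall>x. in_a x \<longrightarrow> (\<exists>c. x = (\<Sum>i<d. gsmult (c i) (u i))))"

definition is_dual_basis_a :: "nat \<Rightarrow> (nat \<Rightarrow> gel) \<Rightarrow> (nat \<Rightarrow> gel) \<Rightarrow> bool" where
  "is_dual_basis_a d u u' \<longleftrightarrow> (\<forall>i<d. in_a (u' i))
     \<and> (\<forall>i<d. \<forall>j<d. gform (u i) (u' j) = (if i = j then 1 else 0))"

definition omegaE6 :: VQ where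
  "omegaE6 = vscale (1/2) (\<Sum>i\<in>idxs. heis (alphaH i) (-1) (heis (lam i) (-1) vac))"

definition omegaF4 :: "nat \<Rightarrow> (nat \<Rightarrow> gel) \<Rightarrow> (nat \<Rightarrow> gel) \<Rightarrow> VQ" where
  "omegaF4 d u u' = vscale (1/20) (\<Sum>i<d. gmode (u i) (-1) (gmode (u' i) (-1) vac))"

end

theory Submission
  imports Defs
begin


definition v6 :: "int \<Rightarrow> int \<Rightarrow> int \<Rightarrow> int \<Rightarrow> int \<Rightarrow> int \<Rightarrow> rlat" where
  "v6 a b c d e f = (\<lambda>i. case i of I1 \<Rightarrow> a | I2 \<Rightarrow> b | I3 \<Rightarrow> c | I4 \<Rightarrow> d | I5 \<Rightarrow> e | I6 \<Rightarrow> f)"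

lemma v6_apply[simp]: "v6 a b c d e f I1 = a" "v6 a b c d e f I2 = b" "v6 a b c d e f I3 = c"
  "v6 a b c d e f I4 = d" "v6 a b c d e f I5 = e" "v6 a b c d e f I6 = f"
  by (simp_all add: v6_def)

lemma v6_eq_iff[simp]: "v6 a b c d e f = v6 a' b' c' d' e' f' \<longleftrightarrow>
   a = a' \<and> b = b' \<and> c = c' \<and> d = d' \<and> e = e' \<and> f = f'"
  by (metis v6_apply v6_def)

lemma rlat_eq_v6: "x = v6 (x I1) (x I2) (x I3) (x I4) (x I5) (x I6)"
  by (simp add: v6_def fun_eq_iff split: idx.split)

lemma v6_add[simp]: "v6 a b c d e f + v6 a' b' c' d' e' f' = v6 (a+a') (b+b') (c+c') (d+d') (e+e') (f+f')"
  by (simp add: v6_def fun_eq_iff split: idx.split)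
lemma v6_diff[simp]: "v6 a b c d e f - v6 a' b' c' d' e' f' = v6 (a-a') (b-b') (c-c') (d-d') (e-e') (f-f')"
  by (simp add: v6_def fun_eq_iff split: idx.split)
lemma v6_uminus[simp]: "- v6 a b c d e f = v6 (-a) (-b) (-c) (-d) (-e) (-f)"
  by (simp add: v6_def fun_eq_iff split: idx.split)
lemma zero_v6: "(0::rlat) = v6 0 0 0 0 0 0"
  by (simp add: v6_def fun_eq_iff split: idx.split)

lemma idxs_UNIV: "idxs = UNIV"
  using idx.exhaust by (auto simp: idxs_def)

lemma sum_idxs: "(\<Sum>i\<in>idxs. f i) = f I1 + f I2 + f I3 + f I4 + f I5 + f I6"
  by (simp add: idxs_def add.assoc)
lemma prod_idxs: "(\<Prod>i\<in>idxs. f i) = f I1 * f I2 * f I3 * f I4 * f I5 * f I6"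
  by (simp add: idxs_def mult.assoc)
lemma ball_idxs: "(\<forall>i\<in>idxs. P i) \<longleftrightarrow> P I1 \<and> P I2 \<and> P I3 \<and> P I4 \<and> P I5 \<and> P I6"
  by (simp add: idxs_def)
lemma all_idx: "(\<forall>i::idx. P i) \<longleftrightarrow> P I1 \<and> P I2 \<and> P I3 \<and> P I4 \<and> P I5 \<and> P I6"
  by (metis idx.exhaust)

lemma cartan_simps[simp]:
  "cartan I1 I1 = 2" "cartan I1 I2 = 0" "cartan I1 I3 = -1" "cartan I1 I4 = 0" "cartan I1 I5 = 0" "cartan I1 I6 = 0"
  "cartan I2 I1 = 0" "cartan I2 I2 = 2" "cartan I2 I3 = 0" "cartan I2 I4 = -1" "cartan I2 I5 = 0" "cartan I2 I6 = 0"
  "cartan I3 I1 = -1" "cartan I3 I2 = 0" "cartan I3 I3 = 2" "cartan I3 I4 = -1" "cartan I3 I5 = 0" "cartan I3 I6 = 0"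
  "cartan I4 I1 = 0" "cartan I4 I2 = -1" "cartan I4 I3 = -1" "cartan I4 I4 = 2" "cartan I4 I5 = -1" "cartan I4 I6 = 0"
  "cartan I5 I1 = 0" "cartan I5 I2 = 0" "cartan I5 I3 = 0" "cartan I5 I4 = -1" "cartan I5 I5 = 2" "cartan I5 I6 = -1"
  "cartan I6 I1 = 0" "cartan I6 I2 = 0" "cartan I6 I3 = 0" "cartan I6 I4 = 0" "cartan I6 I5 = -1" "cartan I6 I6 = 2"
  by (simp_all add: cartan_def adj_def doubleton_eq_iff)

lemma lform_expand: "lform x y = 2 * (x I1 * y I1) - x I1 * y I3 + 2 * (x I2 * y I2) - x I2 * y I4 - x I3 * y I1 + 2 * (x I3 * y I3) - x I3 * y I4 - x I4 * y I2 - x I4 * y I3 + 2 * (x I4 * y I4) - x I4 * y I5 - x I5 * y I4 + 2 * (x I5 * y I5) - x I5 * y I6 - x I6 * y I5 + 2 * (x I6 * y I6)"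
  by (simp add: lform_def sum_idxs algebra_simps)

lemma hform_expand: "hform x y = 2 * (x I1 * y I1) - x I1 * y I3 + 2 * (x I2 * y I2) - x I2 * y I4 - x I3 * y I1 + 2 * (x I3 * y I3) - x I3 * y I4 - x I4 * y I2 - x I4 * y I3 + 2 * (x I4 * y I4) - x I4 * y I5 - x I5 * y I4 + 2 * (x I5 * y I5) - x I5 * y I6 - x I6 * y I5 + 2 * (x I6 * y I6)"
  by (simp add: hform_def sum_idxs algebra_simps)

lemma QtoP_simps[simp]:
  "QtoP a I1 = 2 * a I1 - a I3" "QtoP a I2 = 2 * a I2 - a I4" "QtoP a I3 = 2 * a I3 - a I1 - a I4"
  "QtoP a I4 = 2 * a I4 - a I2 - a I3 - a I5" "QtoP a I5 = 2 * a I5 - a I4 - a I6" "QtoP a I6 = 2 * a I6 - a I5"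
  by (simp_all add: QtoP_def sum_idxs)

definition sg :: "int \<Rightarrow> int" where "sg n = (if odd n then -1 else 1)"

lemma epsP_expand: "epsP p q = sg (p I2 * q I1) * sg (p I2 * q I6) * sg (p I3 * q I1) * sg (p I4 * q I2) * sg (p I5 * q I6)"
  by (simp add: epsP_def prod_idxs epsneg_def sg_def)

lemma epsQ_expand: "epsQ a b = sg (QtoP a I2 * QtoP b I1) * sg (QtoP a I2 * QtoP b I6) * sg (QtoP a I3 * QtoP b I1) * sg (QtoP a I4 * QtoP b I2) * sg (QtoP a I5 * QtoP b I6)"
  by (simp add: epsQ_def epsP_expand)

lemma sg_sq: "sg n * sg n = 1" by (simp add: sg_def)
lemma sg_cases: "sg n = 1 \<or> sg n = -1" by (simp add: sg_def)
lemma sg_mult_uminus: "sg (x * - y) = sg (x * y)" "sg (- x * y) = sg (x * y)" by (simp_all add: sg_def)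

lemma QtoP_uminus: "QtoP (- a) = - QtoP a"
  by (simp add: QtoP_def fun_eq_iff sum_negf[symmetric])

lemma eps_neg_sym: "epsQ a (- a) = epsQ (- a) a"
  by (simp del: QtoP_simps add: epsQ_def epsP_expand QtoP_uminus sg_def)

lemma eps_pm: "epsQ a (- a) = 1 \<or> epsQ a (- a) = -1"
  unfolding epsQ_expand by (auto simp: sg_def)

lemma eps_zero_right[simp]: "epsQ a 0 = 1"
  by (simp add: epsQ_expand sg_def)
lemma eps_zero_left[simp]: "epsQ 0 a = 1"
  by (simp add: epsQ_expand sg_def)

definition tauQ' where "tauQ' = tauQ"
lemma tauI_simps[simp]: "tauI I1 = I6" "tauI I2 = I2" "tauI I3 = I5" "tauI I4 = I4" "tauI I5 = I3" "tauI I6 = I1"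
  by (simp_all add: tauI_def)
lemma tauQ_apply[simp]: "tauQ a I1 = a I6" "tauQ a I2 = a I2" "tauQ a I3 = a I5" "tauQ a I4 = a I4" "tauQ a I5 = a I3" "tauQ a I6 = a I1"
  by (simp_all add: tauQ_def)
lemma tauQ_v6[simp]: "tauQ (v6 a b c d e f) = v6 f b e d c a"
  by (simp add: tauQ_def v6_def fun_eq_iff split: idx.split)
lemma tauQ_tauQ[simp]: "tauQ (tauQ a) = a"
  by (simp add: tauQ_def fun_eq_iff tauI_def split: idx.split)
lemma tauQ_uminus: "tauQ (- a) = - tauQ a"
  by (simp add: tauQ_def fun_eq_iff)
lemma tauQ_diff: "tauQ (a - b) = tauQ a - tauQ b"
  by (simp add: tauQ_def fun_eq_iff)
lemma lform_tau: "lform (tauQ a) (tauQ b) = lform a b"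
  by (simp add: lform_expand algebra_simps)
lemma eps_tau_neg: "epsQ (tauQ a) (- tauQ a) = epsQ a (- a)"
  by (simp add: epsQ_expand sg_def algebra_simps)
lemma lform_uminus: "lform (-a) (-a) = lform a a"
  by (simp add: lform_expand)
lemma lform_sym: "lform a b = lform b a"
  by (simp add: lform_expand algebra_simps)


definition Qf :: "int\<Rightarrow>int\<Rightarrow>int\<Rightarrow>int\<Rightarrow>int\<Rightarrow>int\<Rightarrow>int" where
  "Qf x1 x2 x3 x4 x5 x6 = 2*(x1*x1+x2*x2+x3*x3+x4*x4+x5*x5+x6*x6) - 2*(x1*x3+x3*x4+x4*x5+x5*x6+x2*x4)"
lemma sq_bound: fixes x b :: int assumes "x^2 < (b+1)^2" "0 \<le> b" shows "-b \<le> x \<and> x \<le> b"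
proof (rule ccontr)
  assume "\<not> (-b \<le> x \<and> x \<le> b)"
  then have "b + 1 \<le> \<bar>x\<bar>" by auto
  then have "(b+1)^2 \<le> \<bar>x\<bar>^2" using assms(2) by (intro power_mono) auto
  then show False using assms(1) by simp
qed
lemma bound1: assumes "Qf x1 x2 x3 x4 x5 x6 = 2" shows "x1 \<in> set [-1, 0, 1]"
proof -
  have e: "4 * Qf x1 x2 x3 x4 x5 x6 = 2*((2)*x2 + (-1)*x4)^2 + 2*((2)*x3 + (-1)*x4 + (-1)*x1)^2 + 1*((2)*x4 + (-2)*x5 + (-1)*x1)^2 + 1*((2)*x5 + (-2)*x6 + (-1)*x1)^2 + 1*((2)*x6 + (-1)*x1)^2 + 3*x1^2" unfolding Qf_def by (simp add: power2_eq_square algebra_simps)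
  have s0: "0 \<le> ((2)*x2 + (-1)*x4)^2" by simp
  have s1: "0 \<le> ((2)*x3 + (-1)*x4 + (-1)*x1)^2" by simp
  have s2: "0 \<le> ((2)*x4 + (-2)*x5 + (-1)*x1)^2" by simp
  have s3: "0 \<le> ((2)*x5 + (-2)*x6 + (-1)*x1)^2" by simp
  have s4: "0 \<le> ((2)*x6 + (-1)*x1)^2" by simp
  have "3 * x1^2 \<le> 8" using e assms s0 s1 s2 s3 s4 by linarith
  then have "x1^2 < 4" by linarith
  then have "x1^2 < (1+1)^2" by simp
  from sq_bound[OF this] show ?thesis by auto
qed
lemma bound2: assumes "Qf x1 x2 x3 x4 x5 x6 = 2" shows "x2 \<in> set [-2, -1, 0, 1, 2]"
proof -
  have e: "60 * Qf x1 x2 x3 x4 x5 x6 = 30*((2)*x1 + (-1)*x3)^2 + 10*((3)*x3 + (-2)*x4)^2 + 5*((4)*x4 + (-3)*x5 + (-3)*x2)^2 + 3*((5)*x5 + (-4)*x6 + (-3)*x2)^2 + 18*((2)*x6 + (-1)*x2)^2 + 30*x2^2" unfolding Qf_def by (simp add: power2_eq_square algebra_simps)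
  have s0: "0 \<le> ((2)*x1 + (-1)*x3)^2" by simp
  have s1: "0 \<le> ((3)*x3 + (-2)*x4)^2" by simp
  have s2: "0 \<le> ((4)*x4 + (-3)*x5 + (-3)*x2)^2" by simp
  have s3: "0 \<le> ((5)*x5 + (-4)*x6 + (-3)*x2)^2" by simp
  have s4: "0 \<le> ((2)*x6 + (-1)*x2)^2" by simp
  have "30 * x2^2 \<le> 120" using e assms s0 s1 s2 s3 s4 by linarith
  then have "x2^2 < 9" by linarith
  then have "x2^2 < (2+1)^2" by simp
  from sq_bound[OF this] show ?thesis by auto
qed
lemma bound3: assumes "Qf x1 x2 x3 x4 x5 x6 = 2" shows "x3 \<in> set [-2, -1, 0, 1, 2]"
proof -
  have e: "60 * Qf x1 x2 x3 x4 x5 x6 = 30*((2)*x1 + (-1)*x3)^2 + 30*((2)*x2 + (-1)*x4)^2 + 10*((3)*x4 + (-2)*x5 + (-2)*x3)^2 + 5*((4)*x5 + (-3)*x6 + (-2)*x3)^2 + 3*((5)*x6 + (-2)*x3)^2 + 18*x3^2" unfolding Qf_def by (simp add: power2_eq_square algebra_simps)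
  have s0: "0 \<le> ((2)*x1 + (-1)*x3)^2" by simp
  have s1: "0 \<le> ((2)*x2 + (-1)*x4)^2" by simp
  have s2: "0 \<le> ((3)*x4 + (-2)*x5 + (-2)*x3)^2" by simp
  have s3: "0 \<le> ((4)*x5 + (-3)*x6 + (-2)*x3)^2" by simp
  have s4: "0 \<le> ((5)*x6 + (-2)*x3)^2" by simp
  have "18 * x3^2 \<le> 120" using e assms s0 s1 s2 s3 s4 by linarith
  then have "x3^2 < 9" by linarith
  then have "x3^2 < (2+1)^2" by simp
  from sq_bound[OF this] show ?thesis by auto
qed
lemma bound4: assumes "Qf x1 x2 x3 x4 x5 x6 = 2" shows "x4 \<in> set [-3, -2, -1, 0, 1, 2, 3]"
proof -
  have e: "6 * Qf x1 x2 x3 x4 x5 x6 = 3*((2)*x1 + (-1)*x3)^2 + 3*((2)*x2 + (-1)*x4)^2 + 1*((3)*x3 + (-2)*x4)^2 + 3*((2)*x5 + (-1)*x6 + (-1)*x4)^2 + 1*((3)*x6 + (-1)*x4)^2 + 1*x4^2" unfolding Qf_def by (simp add: power2_eq_square algebra_simps)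
  have s0: "0 \<le> ((2)*x1 + (-1)*x3)^2" by simp
  have s1: "0 \<le> ((2)*x2 + (-1)*x4)^2" by simp
  have s2: "0 \<le> ((3)*x3 + (-2)*x4)^2" by simp
  have s3: "0 \<le> ((2)*x5 + (-1)*x6 + (-1)*x4)^2" by simp
  have s4: "0 \<le> ((3)*x6 + (-1)*x4)^2" by simp
  have "1 * x4^2 \<le> 12" using e assms s0 s1 s2 s3 s4 by linarith
  then have "x4^2 < 16" by linarith
  then have "x4^2 < (3+1)^2" by simp
  from sq_bound[OF this] show ?thesis by auto
qed
lemma bound5: assumes "Qf x1 x2 x3 x4 x5 x6 = 2" shows "x5 \<in> set [-2, -1, 0, 1, 2]"
proof -
  have e: "30 * Qf x1 x2 x3 x4 x5 x6 = 15*((2)*x1 + (-1)*x3)^2 + 15*((2)*x2 + (-1)*x4)^2 + 5*((3)*x3 + (-2)*x4)^2 + 1*((5)*x4 + (-6)*x5)^2 + 15*((2)*x6 + (-1)*x5)^2 + 9*x5^2" unfolding Qf_def by (simp add: power2_eq_square algebra_simps)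
  have s0: "0 \<le> ((2)*x1 + (-1)*x3)^2" by simp
  have s1: "0 \<le> ((2)*x2 + (-1)*x4)^2" by simp
  have s2: "0 \<le> ((3)*x3 + (-2)*x4)^2" by simp
  have s3: "0 \<le> ((5)*x4 + (-6)*x5)^2" by simp
  have s4: "0 \<le> ((2)*x6 + (-1)*x5)^2" by simp
  have "9 * x5^2 \<le> 60" using e assms s0 s1 s2 s3 s4 by linarith
  then have "x5^2 < 9" by linarith
  then have "x5^2 < (2+1)^2" by simp
  from sq_bound[OF this] show ?thesis by auto
qed
lemma bound6: assumes "Qf x1 x2 x3 x4 x5 x6 = 2" shows "x6 \<in> set [-1, 0, 1]"
proof -
  have e: "60 * Qf x1 x2 x3 x4 x5 x6 = 30*((2)*x1 + (-1)*x3)^2 + 30*((2)*x2 + (-1)*x4)^2 + 10*((3)*x3 + (-2)*x4)^2 + 2*((5)*x4 + (-6)*x5)^2 + 3*((4)*x5 + (-5)*x6)^2 + 45*x6^2" unfolding Qf_def by (simp add: power2_eq_square algebra_simps)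
  have s0: "0 \<le> ((2)*x1 + (-1)*x3)^2" by simp
  have s1: "0 \<le> ((2)*x2 + (-1)*x4)^2" by simp
  have s2: "0 \<le> ((3)*x3 + (-2)*x4)^2" by simp
  have s3: "0 \<le> ((5)*x4 + (-6)*x5)^2" by simp
  have s4: "0 \<le> ((4)*x5 + (-5)*x6)^2" by simp
  have "45 * x6^2 \<le> 120" using e assms s0 s1 s2 s3 s4 by linarith
  then have "x6^2 < 4" by linarith
  then have "x6^2 < (1+1)^2" by simp
  from sq_bound[OF this] show ?thesis by auto
qed
definition Rl :: "rlat list" where "Rl = [v6 (-1) (-2) (-2) (-3) (-2) (-1), v6 (-1) (-1) (-2) (-3) (-2) (-1), v6 (-1) (-1) (-2) (-2) (-2) (-1), v6 (-1) (-1) (-2) (-2) (-1) (-1), v6 (-1) (-1) (-2) (-2) (-1) 0, v6 (-1) (-1) (-1) (-2) (-2) (-1), v6 (-1) (-1) (-1) (-2) (-1) (-1), v6 (-1) (-1) (-1) (-2) (-1) 0, v6 (-1) (-1) (-1) (-1) (-1) (-1), v6 (-1) (-1) (-1) (-1) (-1) 0, v6 (-1) (-1) (-1) (-1) 0 0, v6 (-1) 0 (-1) (-1) (-1) (-1), v6 (-1) 0 (-1) (-1) (-1) 0, v6 (-1) 0 (-1) (-1) 0 0, v6 (-1) 0 (-1) 0 0 0, v6 (-1) 0 0 0 0 0, v6 0 (-1) (-1) (-2) (-2) (-1), v6 0 (-1) (-1) (-2) (-1) (-1), v6 0 (-1) (-1) (-2) (-1) 0, v6 0 (-1) (-1) (-1)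 (-1) (-1), v6 0 (-1) (-1) (-1) (-1) 0, v6 0 (-1) (-1) (-1) 0 0, v6 0 (-1) 0 (-1) (-1) (-1), v6 0 (-1) 0 (-1) (-1) 0, v6 0 (-1) 0 (-1) 0 0, v6 0 (-1) 0 0 0 0, v6 0 0 (-1) (-1) (-1) (-1), v6 0 0 (-1) (-1) (-1) 0, v6 0 0 (-1) (-1) 0 0, v6 0 0 (-1) 0 0 0, v6 0 0 0 (-1) (-1) (-1), v6 0 0 0 (-1) (-1) 0, v6 0 0 0 (-1) 0 0, v6 0 0 0 0 (-1) (-1), v6 0 0 0 0 (-1) 0, v6 0 0 0 0 0 (-1), v6 0 0 0 0 0 1, v6 0 0 0 0 1 0, v6 0 0 0 0 1 1, v6 0 0 0 1 0 0, v6 0 0 0 1 1 0, v6 0 0 0 1 1 1, v6 0 0 1 0 0 0, v6 0 0 1 1 0 0, v6 0 0 1 1 1 0, v6 0 0 1 1 1 1, v6 0 1 0 0 0 0, v6 0 1 0 1 0 0, v6 0 1 0 1 1 0, v6 0 1 0 1 1 1, v6 0 1 1 1 0 0, v6 0 1 1 1 1 0, v6 0 1 1 1 1 1, v6 0 1 1 2 1 0, v6 0 1 1 2 1 1, v6 0 1 1 2 2 1, v6 1 0 0 0 0 0, v6 1 0 1 0 0 0, v6 1 0 1 1 0 0, v6 1 0 1 1 1 0, v6 1 0 1 1 1 1, v6 1 1 1 1 0 0, v6 1 1 1 1 1 0, v6 1 1 1 1 1 1, v6 1 1 1 2 1 0, v6 1 1 1 2 1 1, v6 1 1 1 2 2 1,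 v6 1 1 2 2 1 0, v6 1 1 2 2 1 1, v6 1 1 2 2 2 1, v6 1 1 2 3 2 1, v6 1 2 2 3 2 1]"
lemma enum_roots: "\<forall>x1\<in>set[-1,0,1::int]. \<forall>x2\<in>set[-2,-1,0,1,2::int]. \<forall>x3\<in>set[-2,-1,0,1,2::int]. \<forall>x4\<in>set[-3,-2,-1,0,1,2,3::int]. \<forall>x5\<in>set[-2,-1,0,1,2::int]. \<forall>x6\<in>set[-1,0,1::int].
  Qf x1 x2 x3 x4 x5 x6 = 2 \<longrightarrow> v6 x1 x2 x3 x4 x5 x6 \<in> set Rl"
  unfolding Rl_def Qf_def by simp

lemma lform_Qf: "lform a a = Qf (a I1) (a I2) (a I3) (a I4) (a I5) (a I6)"
  by (simp add: lform_expand Qf_def algebra_simps)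

lemma Rl_roots: "\<forall>a\<in>set Rl. lform a a = 2"
  unfolding Rl_def by (simp add: lform_expand)

lemma Phi_eq: "Phi = set Rl"
proof
  show "Phi \<subseteq> set Rl"
  proof
    fix a assume "a \<in> Phi"
    then have q: "Qf (a I1) (a I2) (a I3) (a I4) (a I5) (a I6) = 2" by (simp add: Phi_def lform_Qf)
    have "v6 (a I1) (a I2) (a I3) (a I4) (a I5) (a I6) \<in> set Rl"
      using enum_roots bound1[OF q] bound2[OF q] bound3[OF q] bound4[OF q] bound5[OF q] bound6[OF q] q
      by blast
    then show "a \<in> set Rl" using rlat_eq_v6[of a] by simp
  qed
  show "set Rl \<subseteq> Phi" using Rl_roots by (auto simp: Phi_def)
qed

lemma distinct_Rl: "distinct Rl"
  unfolding Rl_def by simp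

lemma finite_Phi: "finite Phi" by (simp add: Phi_eq)

lemma sum_Phi: "(\<Sum>a\<in>Phi. f a) = sum_list (map f Rl)"
  by (simp add: Phi_eq sum.distinct_set_conv_list distinct_Rl)

lemma Phi_uminus: "a \<in> Phi \<Longrightarrow> - a \<in> Phi" by (simp add: Phi_def lform_uminus)
lemma Phi_tau: "a \<in> Phi \<Longrightarrow> tauQ a \<in> Phi" by (simp add: Phi_def lform_tau)
lemma zero_notin_Phi: "0 \<notin> Phi" by (simp add: Phi_def lform_expand)


abbreviation lk where "lk \<equiv> Poly_Mapping.lookup"

lemma pconst_add: "pconst (a + b) = pconst a + pconst b" by (simp add: pconst_def single_add)
lemma pconst_mult: "pconst (a * b) = pconst a * pconst b" by (simp add: pconst_def mult_single)
lemma pconst_0[simp]: "pconst 0 = 0" by (simp add: pconst_def)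
lemma pconst_1[simp]: "pconst 1 = 1" by (simp add: pconst_def)
lemma pconst_uminus: "pconst (- a) = - pconst a" by (simp add: pconst_def single_uminus)
lemma pconst_diff: "pconst (a - b) = pconst a - pconst b" by (simp add: pconst_def single_diff)
lemma pconst_sum: "pconst (\<Sum>i\<in>A. f i) = (\<Sum>i\<in>A. pconst (f i))"
  by (induction A rule: infinite_finite_induct) (simp_all add: pconst_add)

lemma lookup_pconst_mult: "lk (pconst c * p) m = c * lk p m"
  by (simp add: pconst_def mult_map_scale_conv_mult[symmetric] map.rep_eq when_def)

lemma lookup_pconst: "lk (pconst c) m = (if m = 0 then c else 0)"
  by (simp add: pconst_def lookup_single when_def)

lemma single_sum: "Poly_Mapping.single k (\<Sum>i\<in>A. f i) = (\<Sum>i\<in>A. Poly_Mapping.single k (f i))"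
  by (induction A rule: infinite_finite_induct) (simp_all add: single_add)

lemma lookup_sv_plus: "lk (m + Poly_Mapping.single v (1::nat)) v = lk m v + 1"
  by (simp add: lookup_add)

lemma lookup_sv_plus'[simp]: "lk (m + Poly_Mapping.single v (Suc 0)) v = Suc (lk m v)"
  by (simp add: lookup_add)

lemma plus_sv_minus: "(m + Poly_Mapping.single v (1::nat)) - Poly_Mapping.single v 1 = m"
  by (rule poly_mapping_eqI) (simp add: lookup_add lookup_minus lookup_single when_def)

lemma minus_sv_plus: "lk m v \<noteq> 0 \<Longrightarrow> (m - Poly_Mapping.single v (1::nat)) + Poly_Mapping.single v 1 = m"
  by (rule poly_mapping_eqI) (auto simp: lookup_add lookup_minus lookup_single when_def)

lemma lookup_pderiv:
  "lk (pderiv_var v p) m' = of_nat (lk m' v + 1) * lk p (m' + Poly_Mapping.single v 1)"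
proof -
  let ?m0 = "m' + Poly_Mapping.single v (1::nat)"
  have "lk (pderiv_var v p) m' =
     (\<Sum>m\<in>Poly_Mapping.keys p. (if m - Poly_Mapping.single v 1 = m' then of_nat (lk m v) * lk p m else 0))"
    by (simp add: pderiv_var_def lookup_sum lookup_single when_def)
  also have "\<dots> = (\<Sum>m\<in>Poly_Mapping.keys p. (if m = ?m0 then of_nat (lk m v) * lk p m else 0))"
  proof (rule sum.cong[OF refl])
    fix m assume "m \<in> Poly_Mapping.keys p"
    show "(if m - Poly_Mapping.single v 1 = m' then of_nat (lk m v) * lk p m else 0) =
          (if m = ?m0 then of_nat (lk m v) * lk p m else 0)"
    proof (cases "lk m v = 0")
      case True
      then have "m \<noteq> ?m0" using lookup_sv_plus[of m' v] by auto
      then show ?thesis using True by simp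
    next
      case False
      then show ?thesis using minus_sv_plus[OF False] plus_sv_minus[of m' v] by auto
    qed
  qed
  also have "\<dots> = (if ?m0 \<in> Poly_Mapping.keys p then of_nat (lk ?m0 v) * lk p ?m0 else 0)"
    by (simp add: sum.delta')
  also have "\<dots> = of_nat (lk m' v + 1) * lk p ?m0"
    by (auto simp: in_keys_iff)
  finally show ?thesis .
qed

lemma sv_plus_ne0[simp]: "m + Poly_Mapping.single v (Suc 0) \<noteq> 0"
proof
  assume "m + Poly_Mapping.single v (Suc 0) = 0"
  then have "lk (m + Poly_Mapping.single v (Suc 0)) v = 0" by simp
  then show False by simp
qed

lemma lookup_mult_pconst: "lk (p * pconst c) m = c * lk p m"
  by (simp add: mult.commute[of p] lookup_pconst_mult)

lemma pderiv_pconst[simp]: "pderiv_var v (pconst c) = 0"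
  by (rule poly_mapping_eqI) (simp add: lookup_pderiv lookup_pconst sv_plus_ne0)

lemma pderiv_zero[simp]: "pderiv_var v 0 = 0"
  by (simp add: pderiv_var_def)

lemma pderiv_add: "pderiv_var v (p + q) = pderiv_var v p + pderiv_var v q"
  by (rule poly_mapping_eqI) (simp add: lookup_pderiv lookup_add algebra_simps)

lemma pderiv_pconst_mult: "pderiv_var v (pconst c * p) = pconst c * pderiv_var v p"
  by (rule poly_mapping_eqI) (simp add: lookup_pderiv lookup_pconst_mult lookup_mult_pconst algebra_simps)

lemma pderiv_sum: "pderiv_var v (\<Sum>i\<in>A. f i) = (\<Sum>i\<in>A. pderiv_var v (f i))"
  by (induction A rule: infinite_finite_induct) (simp_all add: pderiv_add)

lemma sv_eq_iff: "(Poly_Mapping.single w (1::nat) = m + Poly_Mapping.single v 1) \<longleftrightarrow> (m = 0 \<and> w = v)"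
proof
  assume h: "Poly_Mapping.single w (1::nat) = m + Poly_Mapping.single v 1"
  have "lk (Poly_Mapping.single w (1::nat)) v = lk m v + 1"
    using h by (simp add: lookup_add)
  then have wv: "w = v" by (auto simp: lookup_single when_def split: if_splits)
  then have "m = 0" using h
    by (metis add_cancel_right_left)
  then show "m = 0 \<and> w = v" using wv by simp
qed auto

lemma pderiv_pvar: "pderiv_var v (pvar w) = (if v = w then 1 else 0)"
proof (rule poly_mapping_eqI)
  fix m
  have "lk (pderiv_var v (pvar w)) m = of_nat (lk m v + 1) * (if Poly_Mapping.single w (1::nat) = m + Poly_Mapping.single v 1 then 1 else 0)"
    by (simp add: lookup_pderiv pvar_def lookup_single when_def)
  also have "\<dots> = (if m = 0 \<and> w = v then 1 else 0)"
    unfolding sv_eq_iff by auto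
  finally show "lk (pderiv_var v (pvar w)) m = lk (if v = w then 1 else 0) m"
    by (auto simp: lookup_one when_def)
qed

definition Lk :: "hvec \<Rightarrow> nat \<Rightarrow> fock" where
  "Lk h k = (\<Sum>i\<in>idxs. pconst (h i) * pvar (i, k))"

lemma hmul_Lk: "hmul h n p = Lk h (n - 1) * p"
  by (simp add: hmul_def Lk_def)

lemma pderiv_Lk: "pderiv_var (j, k') (Lk h k) = (if k' = k then pconst (h j) else 0)"
proof -
  have j: "j \<in> idxs" by (simp add: idxs_UNIV)
  show ?thesis
    by (simp add: Lk_def pderiv_sum pderiv_pconst_mult pderiv_pvar if_distrib sum.delta[OF _ ] j idxs_def[symmetric]
      cong: if_cong) (cases j; simp add: idxs_def)
qed

lemma Lk_add: "Lk (\<lambda>i. h i + g i) k = Lk h k + Lk g k"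
  by (simp add: Lk_def pconst_add distrib_right sum.distrib)
lemma Lk_zero[simp]: "Lk (\<lambda>i. 0) k = 0"
  by (simp add: Lk_def)
lemma Lk_scale: "pconst c * Lk h k = Lk (\<lambda>i. c * h i) k"
  by (simp add: Lk_def sum_distrib_left pconst_mult mult.assoc)
lemma Lk_sum: "Lk (\<lambda>i. \<Sum>j\<in>A. f j i) k = (\<Sum>j\<in>A. Lk (f j) k)"
  by (induction A rule: infinite_finite_induct) (simp_all add: Lk_add)

lemma alphaH_apply: "alphaH i j = (if j = i then 1 else 0)"
  by (simp add: alphaH_def toH_def alphaQ_def)

lemma hform_alphaH_sum: "(\<Sum>i\<in>idxs. hform h (alphaH i) * g i) = hform h g"
  by (simp add: sum_idxs hform_expand alphaH_apply algebra_simps)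

lemma hder_pconst[simp]: "hder h n (pconst c) = 0"
  by (simp add: hder_def)
lemma hder_zero[simp]: "hder h n 0 = 0"
  by (simp add: hder_def)

lemma hder1_Lk0: "hder h 1 (Lk g 0) = pconst (hform h g)"
proof -
  have "hder h 1 (Lk g 0) = (\<Sum>i\<in>idxs. pconst (hform h (alphaH i) * g i))"
    by (simp add: hder_def pderiv_Lk pconst_mult)
  also have "\<dots> = pconst (hform h g)" by (simp add: pconst_sum[symmetric] hform_alphaH_sum)
  finally show ?thesis .
qed

lemma hder_Lk0_ge2: "n \<ge> 2 \<Longrightarrow> hder h n (Lk g 0) = 0"
  by (simp add: hder_def pderiv_Lk)


lemma Emlist_length[simp]: "length (Emlist h i) = Suc i" by (induction i) auto
lemma Eplist_length[simp]: "length (Eplist h i) = Suc i" by (induction i) auto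

lemma Emlist_nth: "m \<le> i \<Longrightarrow> Emlist h i ! m = Emlist h m ! m"
proof (induction i)
  case (Suc i)
  show ?case
  proof (cases "m \<le> i")
    case True
    then have "Emlist h (Suc i) ! m = Emlist h i ! m" by (simp add: nth_append)
    then show ?thesis using Suc True by simp
  next
    case False
    then have "m = Suc i" using Suc by simp
    then show ?thesis by simp
  qed
qed simp

lemma Eplist_nth: "m \<le> i \<Longrightarrow> Eplist h i ! m = Eplist h m ! m"
proof (induction i)
  case (Suc i)
  show ?case
  proof (cases "m \<le> i")
    case True
    then have "Eplist h (Suc i) ! m = Eplist h i ! m" by (simp add: nth_append)
    then show ?thesis using Suc True by simp
  next
    case False
    then have "m = Suc i" using Suc by simp
    then show ?thesis by simp
  qed
qed simp

definition Emn :: "hvec \<Rightarrow> nat \<Rightarrow> fock \<Rightarrow> fock" where "Emn h i p = (Emlist h i ! i) p"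

lemma Em_Emn: "Em h i p = (if i < 0 then 0 else Emn h (nat i) p)"
  by (simp add: Em_def Emn_def)

lemma Emn_0[simp]: "Emn h 0 p = p" by (simp add: Emn_def)
lemma Ep_0[simp]: "Ep h 0 p = p" by (simp add: Ep_def)

lemma Emn_Suc: "Emn h (Suc i) p = pconst (1 / of_nat (Suc i)) *
   (\<Sum>k\<in>{1..Suc i}. hmul h k (Emn h (Suc i - k) p))"
proof -
  have "Emn h (Suc i) p = pconst (1 / of_nat (Suc i)) *
   (\<Sum>k\<in>{1..Suc i}. hmul h k ((Emlist h i ! (Suc i - k)) p))"
    unfolding Emn_def by (simp only: Emlist.simps nth_append Emlist_length) simp
  also have "\<dots> = pconst (1 / of_nat (Suc i)) * (\<Sum>k\<in>{1..Suc i}. hmul h k (Emn h (Suc i - k) p))"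
    by (intro arg_cong2[where f="(*)"] refl sum.cong arg_cong[where f="hmul h _"]) (auto simp only: Emn_def intro!: fun_cong[where x=p] Emlist_nth; auto)
  finally show ?thesis .
qed

lemma Ep_Suc: "Ep h (Suc i) p = pconst (1 / of_nat (Suc i)) *
   (\<Sum>k\<in>{1..Suc i}. - hder h k (Ep h (Suc i - k) p))"
proof -
  have "Ep h (Suc i) p = pconst (1 / of_nat (Suc i)) *
   (\<Sum>k\<in>{1..Suc i}. - hder h k ((Eplist h i ! (Suc i - k)) p))"
    unfolding Ep_def by (simp only: Eplist.simps nth_append Eplist_length) simp
  also have "\<dots> = pconst (1 / of_nat (Suc i)) * (\<Sum>k\<in>{1..Suc i}. - hder h k (Ep h (Suc i - k) p))"
    by (intro arg_cong2[where f="(*)"] refl sum.cong arg_cong[where f="uminus"] arg_cong[where f="hder h _"]) (auto simp only: Ep_def intro!: fun_cong[where x=p] Eplist_nth; auto)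
  finally show ?thesis .
qed

lemma Emn_scale: "Emn h i (pconst c * p) = pconst c * Emn h i p"
proof (induction i rule: less_induct)
  case (less i)
  show ?case
  proof (cases i)
    case 0 then show ?thesis by simp
  next
    case (Suc j)
    have "Emn h i (pconst c * p) = pconst (1 / of_nat (Suc j)) *
       (\<Sum>k\<in>{1..Suc j}. hmul h k (pconst c * Emn h (Suc j - k) p))"
      unfolding Suc Emn_Suc
      by (intro arg_cong2[where f="(*)"] refl sum.cong) (auto simp: less.IH Suc)
    also have "\<dots> = pconst c * Emn h i p"
    proof -
      have "(\<Sum>k\<in>{1..Suc j}. hmul h k (pconst c * Emn h (Suc j - k) p)) = pconst c * (\<Sum>k\<in>{1..Suc j}. hmul h k (Emn h (Suc j - k) p))"
        unfolding hmul_Lk sum_distrib_left by (rule sum.cong) (simp_all add: mult.left_commute)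
      then show ?thesis unfolding Suc Emn_Suc by (simp only: mult.left_commute)
    qed
    finally show ?thesis .
  qed
qed

lemma Emn_zero[simp]: "Emn h i 0 = 0"
  using Emn_scale[of h i 0 0] by simp

lemma Em_zero[simp]: "Em h i 0 = 0"
  by (simp add: Em_Emn)

lemma Em_scale: "Em h i (pconst c * p) = pconst c * Em h i p"
  by (simp add: Em_Emn Emn_scale)

lemma Em_const: "Em h i (pconst c) = pconst c * Em h i 1"
  using Em_scale[of h i c 1] by simp

lemma Em_0[simp]: "Em h 0 p = p" by (simp add: Em_Emn)
lemma Em_neg: "i < 0 \<Longrightarrow> Em h i p = 0" by (simp add: Em_Emn)
lemma Emn_1: "Emn h (Suc 0) p = Lk h 0 * p"
  using Emn_Suc[of h 0 p] by (simp add: hmul_Lk)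
lemma Em_1: "Em h 1 p = Lk h 0 * p"
  using Emn_1[of h p] by (simp add: Em_Emn)
lemma Emn_2: "Emn h (Suc (Suc 0)) p = pconst (1/2) * (Lk h 0 * (Lk h 0 * p) + Lk h 1 * p)"
proof -
  have s: "{1..Suc (Suc 0)} = {1, Suc (Suc 0)}" by auto
  have "Emn h (Suc (Suc 0)) p = pconst (1 / of_nat (Suc (Suc 0))) * (\<Sum>k\<in>{1..Suc (Suc 0)}. hmul h k (Emn h (Suc (Suc 0) - k) p))"
    by (rule Emn_Suc)
  also have "\<dots> = pconst (1 / 2) * (hmul h 1 (Emn h (Suc 0) p) + hmul h (Suc (Suc 0)) (Emn h 0 p))"
    unfolding s by simp
  also have "\<dots> = pconst (1/2) * (Lk h 0 * (Lk h 0 * p) + Lk h 1 * p)"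
    unfolding Emn_1 Emn_0 hmul_Lk by simp
  finally show ?thesis .
qed
lemma Em_2: "Em h 2 p = pconst (1/2) * (Lk h 0 * (Lk h 0 * p) + Lk h 1 * p)"
proof -
  have "Em h 2 p = Emn h (Suc (Suc 0)) p" by (simp add: Em_Emn numeral_2_eq_2)
  then show ?thesis by (simp only: Emn_2)
qed

lemma Ep_zero[simp]: "Ep h j 0 = 0"
proof (induction j rule: less_induct)
  case (less j)
  then show ?case by (cases j) (simp_all add: Ep_Suc)
qed

lemma Ep_pconst: "j \<ge> 1 \<Longrightarrow> Ep h j (pconst c) = 0"
proof (induction j rule: less_induct)
  case (less j)
  then obtain i where j: "j = Suc i" by (cases j) auto
  have "(\<Sum>k\<in>{1..Suc i}. - hder h k (Ep h (Suc i - k) (pconst c))) = 0"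
  proof (rule sum.neutral, intro ballI)
    fix k assume "k \<in> {1..Suc i}"
    show "- hder h k (Ep h (Suc i - k) (pconst c)) = 0"
    proof (cases "Suc i - k = 0")
      case True then show ?thesis by simp
    next
      case False then show ?thesis using less.IH[of "Suc i - k"] \<open>k \<in> {1..Suc i}\<close> j by simp
    qed
  qed
  then show ?case by (simp add: j Ep_Suc)
qed

lemma Ep_1: "Ep h 1 p = - hder h 1 p"
  using Ep_Suc[of h 0 p] by simp

lemma Ep_1_Lk0: "Ep h 1 (Lk g 0) = - pconst (hform h g)"
  by (simp only: Ep_1 hder1_Lk0)

lemma Ep_1_Lk0'[simp]: "Ep h (Suc 0) (Lk g 0) = - pconst (hform h g)"
  using Ep_1_Lk0 by simp

lemma Ep_Lk0_ge2: "j \<ge> 2 \<Longrightarrow> Ep h j (Lk g 0) = 0"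
proof (induction j rule: less_induct)
  case (less j)
  then obtain i where j: "j = Suc i" by (cases j) auto
  have "(\<Sum>k\<in>{1..Suc i}. - hder h k (Ep h (Suc i - k) (Lk g 0))) = 0"
  proof (rule sum.neutral, intro ballI)
    fix k assume k: "k \<in> {1..Suc i}"
    consider "Suc i - k = 0" | "Suc i - k = 1" | "Suc i - k \<ge> 2" by linarith
    then show "- hder h k (Ep h (Suc i - k) (Lk g 0)) = 0"
    proof cases
      case 1 then have "k \<ge> 2" using less.prems j k by auto
      then show ?thesis using 1 by (simp add: hder_Lk0_ge2)
    next
      case 2 then show ?thesis by (simp add: Ep_1_Lk0 pconst_uminus[symmetric])
    next
      case 3 then show ?thesis using less.IH[of "Suc i - k"] k j by simp
    qed
  qed
  then show ?case by (simp add: j Ep_Suc)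
qed

lemma wtb_pconst[simp]: "wtb (pconst c) = 0"
  by (simp add: wtb_def pconst_def)

lemma wtb_zero[simp]: "wtb 0 = 0"
  by (simp add: wtb_def)

lemma wtb0_pderiv:
  assumes "wtb p = 0" shows "pderiv_var v p = 0"
proof -
  have keys0: "m = 0" if m: "m \<in> Poly_Mapping.keys p" for m
  proof -
    have "(\<Sum>w\<in>Poly_Mapping.keys m. lk m w * (snd w + 1)) = 0"
      using assms m by (simp add: wtb_def sum_eq_0_iff)
    then have "\<forall>w\<in>Poly_Mapping.keys m. lk m w * (snd w + 1) = 0"
      by (simp add: sum_eq_0_iff)
    then have "\<forall>w. lk m w = 0" by (metis in_keys_iff mult_is_0 add_is_0 one_neq_zero)
    then show "m = 0" by (intro poly_mapping_eqI) (simp only: lookup_zero)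
  qed
  show ?thesis
  proof (rule poly_mapping_eqI)
    fix m'
    have "m' + Poly_Mapping.single v 1 \<notin> Poly_Mapping.keys p"
      using keys0 sv_plus_ne0[of m' v] by (metis One_nat_def)
    then show "lk (pderiv_var v p) m' = lk 0 m'"
      by (simp add: lookup_pderiv in_keys_iff)
  qed
qed

lemma wtb0_Ep1: "wtb p = 0 \<Longrightarrow> Ep h 1 p = 0"
  by (simp only: Ep_1) (simp add: hder_def wtb0_pderiv)

lemma wtb0_Ep1': "wtb p = 0 \<Longrightarrow> Ep h (Suc 0) p = 0"
  using wtb0_Ep1 by simp

lemma sum_upto_two:
  fixes F :: "nat \<Rightarrow> 'a::comm_monoid_add"
  assumes "\<And>j. j \<ge> 2 \<Longrightarrow> F j = 0" "w = 0 \<Longrightarrow> F 1 = 0"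
  shows "(\<Sum>j\<in>{0..w}. F j) = F 0 + F 1"
  using assms
proof (induction w)
  case 0 then show ?case by simp
next
  case (Suc w)
  show ?case
  proof (cases "w = 0")
    case True then show ?thesis by simp
  next
    case False
    then have "(\<Sum>j\<in>{0..w}. F j) = F 0 + F 1" using Suc by simp
    moreover have "F (Suc w) = 0" using Suc.prems(1) False by simp
    ultimately show ?thesis by simp
  qed
qed

lemma Gsum_const: "(\<Sum>j\<in>{0..wtb (pconst c)}. Em h (int j - n - 1 - l) (Ep h j (pconst c)))
   = pconst c * Em h (- n - 1 - l) 1"
  by (simp add: Em_const)

lemma Gsum_Lk0: "(\<Sum>j\<in>{0..wtb (Lk g 0)}. Em h (int j - n - 1 - l) (Ep h j (Lk g 0)))
   = Em h (- n - 1 - l) (Lk g 0) + Em h (- n - l) (- pconst (hform h g))"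
proof -
  have "(\<Sum>j\<in>{0..wtb (Lk g 0)}. Em h (int j - n - 1 - l) (Ep h j (Lk g 0)))
     = Em h (int 0 - n - 1 - l) (Ep h 0 (Lk g 0)) + Em h (int 1 - n - 1 - l) (Ep h 1 (Lk g 0))"
    by (rule sum_upto_two) (auto simp: Ep_Lk0_ge2 wtb0_Ep1' simp del: Ep_1_Lk0')
  then show ?thesis by (simp add: Ep_1_Lk0)
qed


lemma lookup_sum_single: "lk (\<Sum>b\<in>A. Poly_Mapping.single b (f b)) k = (\<Sum>b\<in>A. if b = k then f b else 0)"
  by (simp add: lookup_sum lookup_single when_def)

lemma vmap_superset:
  assumes "finite S" "Poly_Mapping.keys v \<subseteq> S" "\<And>b. F b 0 = 0"
  shows "vmap F v = (\<Sum>b\<in>S. Poly_Mapping.single b (F b (lk v b)))"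
  unfolding vmap_def
  by (rule sum.mono_neutral_left) (auto simp: assms in_keys_iff)

lemma lookup_vmap:
  assumes "\<And>b. F b 0 = 0"
  shows "lk (vmap F v) k = F k (lk v k)"
proof -
  have "lk (vmap F v) k = (\<Sum>b\<in>Poly_Mapping.keys v. if b = k then F b (lk v b) else 0)"
    by (simp add: vmap_def lookup_sum_single)
  also have "\<dots> = (if k \<in> Poly_Mapping.keys v then F k (lk v k) else 0)"
    by (simp add: sum.delta')
  also have "\<dots> = F k (lk v k)" using assms by (auto simp: in_keys_iff)
  finally show ?thesis .
qed

lemma lookup_vscale: "lk (vscale c v) k = pconst c * lk v k"
  unfolding vscale_def by (rule lookup_vmap) simp

lemma vscale_add: "vscale c (v + w) = vscale c v + vscale c w"
  by (rule poly_mapping_eqI) (simp add: lookup_vscale lookup_add distrib_left)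
lemma vscale_zero[simp]: "vscale c 0 = 0"
  by (rule poly_mapping_eqI) (simp add: lookup_vscale)
lemma vscale_sum: "vscale c (\<Sum>i\<in>A. f i) = (\<Sum>i\<in>A. vscale c (f i))"
  by (induction A rule: infinite_finite_induct) (simp_all add: vscale_add)
lemma vscale_single: "vscale c (Poly_Mapping.single b p) = Poly_Mapping.single b (pconst c * p)"
  by (rule poly_mapping_eqI) (simp add: lookup_vscale lookup_single when_def)
lemma vscale_diff: "vscale c (v - w) = vscale c v - vscale c w"
  by (rule poly_mapping_eqI) (simp add: lookup_vscale lookup_minus right_diff_distrib)
lemma vscale_uminus: "vscale c (- v) = - vscale c v"
  by (rule poly_mapping_eqI) (simp add: lookup_vscale)
lemma vscale_0[simp]: "vscale 0 v = 0"
  by (rule poly_mapping_eqI) (simp add: lookup_vscale)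

definition Gf :: "rlat \<Rightarrow> int \<Rightarrow> rlat \<Rightarrow> fock \<Rightarrow> fock" where
  "Gf a n b p = (\<Sum>j\<in>{0..wtb p}. Em (toH a) (int j - n - 1 - lform a b) (Ep (toH a) j p))"

lemma Gf_zero[simp]: "Gf a n b 0 = 0" by (simp add: Gf_def)

lemma emode_superset:
  assumes "finite S" "Poly_Mapping.keys v \<subseteq> S"
  shows "emode a n v = (\<Sum>b\<in>S. Poly_Mapping.single (a + b) (pconst (of_int (epsQ a b)) * Gf a n b (lk v b)))"
  unfolding emode_def Gf_def[symmetric]
  by (rule sum.mono_neutral_left) (auto simp: assms in_keys_iff)

lemma heis_neg1: "heis h (-1) v = vmap (\<lambda>_ p. Lk h 0 * p) v"
  by (simp add: heis_def hmul_Lk[abs_def])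

lemma vac_keys: "Poly_Mapping.keys vac = {0}"
  by (simp add: vac_def tens_def)

lemma lk_vac: "lk vac b = (if b = 0 then 1 else 0)"
  by (simp add: vac_def tens_def lookup_one when_def)

lemma heis_vac: "heis h (-1) vac = Poly_Mapping.single 0 (Lk h 0)"
proof -
  have "heis h (-1) vac = (\<Sum>b\<in>{0}. Poly_Mapping.single b (Lk h 0 * lk vac b))"
    unfolding heis_neg1 by (rule vmap_superset) (simp_all add: vac_keys)
  then show ?thesis by (simp add: lk_vac)
qed

lemma toH_zero[simp]: "toH 0 = (\<lambda>i. 0)" by (simp add: toH_def)

lemma lform_zero_right[simp]: "lform a 0 = 0" by (simp add: lform_def)

lemma emode_vac: "emode a (-1) vac = Poly_Mapping.single a 1"
proof -
  have "emode a (-1) vac = (\<Sum>b\<in>{0}. Poly_Mapping.single (a + b) (pconst (of_int (epsQ a b)) * Gf a (-1) b (lk vac b)))"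
    by (rule emode_superset) (simp_all add: vac_keys)
  also have "\<dots> = Poly_Mapping.single a (Gf a (-1) 0 1)" by (simp add: lk_vac)
  also have "Gf a (-1) 0 1 = 1"
    using Gsum_const[of "toH a" "-1" 0 1] by (simp add: Gf_def)
  finally show ?thesis .
qed

definition Vv :: "hvec \<Rightarrow> (rlat \<Rightarrow> complex) \<Rightarrow> VQ" where
  "Vv h c = Poly_Mapping.single 0 (Lk h 0) + (\<Sum>b\<in>Phi. Poly_Mapping.single b (pconst (c b)))"

lemma gmode_vac: "gmode y (-1) vac = Vv (hpart y) (\<lambda>b. y (Inr b))"
  by (simp add: gmode_def heis_vac emode_vac vscale_single Vv_def)

lemma lk_Vv0: "lk (Vv h c) 0 = Lk h 0"
  using zero_notin_Phi by (simp add: Vv_def lookup_add lookup_sum_single lookup_single when_def finite_Phi sum.delta')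

lemma lk_VvPhi: "b \<in> Phi \<Longrightarrow> lk (Vv h c) b = pconst (c b)"
  using zero_notin_Phi by (auto simp add: Vv_def lookup_add lookup_sum_single lookup_single when_def finite_Phi sum.delta')

lemma keys_Vv: "Poly_Mapping.keys (Vv h c) \<subseteq> insert 0 Phi"
proof
  fix k assume "k \<in> Poly_Mapping.keys (Vv h c)"
  then have "lk (Vv h c) k \<noteq> 0" by (simp add: in_keys_iff)
  then show "k \<in> insert 0 Phi"
    by (auto simp add: Vv_def lookup_add lookup_sum_single lookup_single when_def finite_Phi sum.delta' split: if_splits)
qed

lemma sum_insert0: "(\<Sum>b\<in>insert 0 Phi. f b) = f 0 + (\<Sum>b\<in>Phi. f b)"
  using zero_notin_Phi finite_Phi by simp

lemma heis_Vv: "heis g (-1) (Vv h c) = Poly_Mapping.single 0 (Lk g 0 * Lk h 0)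
    + (\<Sum>b\<in>Phi. Poly_Mapping.single b (Lk g 0 * pconst (c b)))"
proof -
  have "heis g (-1) (Vv h c) = (\<Sum>b\<in>insert 0 Phi. Poly_Mapping.single b (Lk g 0 * lk (Vv h c) b))"
    unfolding heis_neg1 by (rule vmap_superset) (simp_all add: keys_Vv finite_Phi)
  also have "\<dots> = Poly_Mapping.single 0 (Lk g 0 * Lk h 0)
    + (\<Sum>b\<in>Phi. Poly_Mapping.single b (Lk g 0 * pconst (c b)))"
    by (simp add: sum_insert0 lk_Vv0 lk_VvPhi cong: sum.cong)
  finally show ?thesis .
qed

lemma Gf_Lk0: "Gf a (-1) 0 (Lk h 0) = Lk h 0 - Lk (toH a) 0 * pconst (hform (toH a) h)"
  using Gsum_Lk0[of "toH a" "-1" 0 h] by (simp add: Gf_def Em_1 pconst_uminus)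

lemma Gf_const: "Gf a (-1) b (pconst c) = pconst c * Em (toH a) (- lform a b) 1"
  using Gsum_const[of "toH a" "-1" "lform a b" c] by (simp add: Gf_def)

lemma emode_Vv: "emode a (-1) (Vv h c) =
   Poly_Mapping.single a (Lk h 0 - Lk (toH a) 0 * pconst (hform (toH a) h))
   + (\<Sum>b\<in>Phi. Poly_Mapping.single (a + b) (pconst (of_int (epsQ a b)) * (pconst (c b) * Em (toH a) (- lform a b) 1)))"
proof -
  have "emode a (-1) (Vv h c) = (\<Sum>b\<in>insert 0 Phi. Poly_Mapping.single (a + b) (pconst (of_int (epsQ a b)) * Gf a (-1) b (lk (Vv h c) b)))"
    by (rule emode_superset) (simp_all add: keys_Vv finite_Phi)
  also have "\<dots> = Poly_Mapping.single a (Lk h 0 - Lk (toH a) 0 * pconst (hform (toH a) h))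
   + (\<Sum>b\<in>Phi. Poly_Mapping.single (a + b) (pconst (of_int (epsQ a b)) * (pconst (c b) * Em (toH a) (- lform a b) 1)))"
    by (simp add: sum_insert0 lk_Vv0 lk_VvPhi Gf_Lk0 Gf_const cong: sum.cong)
  finally show ?thesis .
qed


definition QF :: "(idx \<Rightarrow> idx \<Rightarrow> complex) \<Rightarrow> fock" where
  "QF c = (\<Sum>r\<in>idxs. \<Sum>s\<in>idxs. pconst (c r s) * (pvar (r, 0) * pvar (s, 0)))"

lemma QF_add: "QF (\<lambda>r s. c r s + d r s) = QF c + QF d"
  by (simp add: QF_def pconst_add distrib_right sum.distrib)
lemma QF_zero[simp]: "QF (\<lambda>r s. 0) = 0"
  by (simp add: QF_def)

lemma Lk_mult: "Lk h 0 * Lk g 0 = QF (\<lambda>r s. h r * g s)"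
  unfolding Lk_def QF_def sum_product by (simp add: pconst_mult mult_ac)

lemma Lk_mult_const: "Lk h 0 * pconst c = Lk (\<lambda>r. h r * c) 0"
  by (simp add: Lk_scale[symmetric] mult.commute)

lemma hform_scale2: "hform h (\<lambda>s. c * g s) = c * hform h g"
  by (simp add: hform_def sum_distrib_left mult_ac)
lemma hform_add2: "hform h (\<lambda>s. f s + g s) = hform h f + hform h g"
  by (simp add: hform_def distrib_left distrib_right sum.distrib)
lemma hform_zero2[simp]: "hform h (\<lambda>s. 0) = 0"
  by (simp add: hform_def)

definition C3 :: "rlat \<Rightarrow> hvec \<Rightarrow> fock" where
  "C3 a g = Lk g 0 - Lk (toH a) 0 * pconst (hform (toH a) g)"

lemma C3_scale: "pconst c * C3 a g = C3 a (\<lambda>s. c * g s)"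
  by (simp add: C3_def Lk_scale hform_scale2 pconst_mult right_diff_distrib mult_ac)
lemma C3_add: "C3 a (\<lambda>s. f s + g s) = C3 a f + C3 a g"
  by (simp add: C3_def Lk_add hform_add2 pconst_add algebra_simps)
lemma C3_zero[simp]: "C3 a (\<lambda>s. 0) = 0"
  by (simp add: C3_def)

definition Ek :: "rlat \<Rightarrow> rlat \<Rightarrow> fock" where
  "Ek a b = Em (toH a) (- lform a b) 1"

definition Psi :: "(idx + rlat \<Rightarrow> idx + rlat \<Rightarrow> complex) \<Rightarrow> VQ" where
  "Psi M = Poly_Mapping.single 0 (QF (\<lambda>r s. M (Inl r) (Inl s)))
   + (\<Sum>b\<in>Phi. Poly_Mapping.single b (Lk (\<lambda>r. M (Inl r) (Inr b)) 0))
   + (\<Sum>a\<in>Phi. Poly_Mapping.single a (C3 a (\<lambda>s. M (Inr a) (Inl s))))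
   + (\<Sum>a\<in>Phi. \<Sum>b\<in>Phi. Poly_Mapping.single (a + b)
        (pconst (of_int (epsQ a b) * M (Inr a) (Inr b)) * Ek a b))"

lemma B_Psi: "gmode x (-1) (gmode y (-1) vac) = Psi (\<lambda>k l. x k * y l)"
proof -
  have "gmode x (-1) (gmode y (-1) vac) =
     heis (hpart x) (-1) (Vv (hpart y) (\<lambda>b. y (Inr b)))
     + (\<Sum>a\<in>Phi. vscale (x (Inr a)) (emode a (-1) (Vv (hpart y) (\<lambda>b. y (Inr b)))))"
    unfolding gmode_vac by (simp add: gmode_def)
  also have "\<dots> = Poly_Mapping.single 0 (Lk (hpart x) 0 * Lk (hpart y) 0)
    + (\<Sum>b\<in>Phi. Poly_Mapping.single b (Lk (hpart x) 0 * pconst (y (Inr b))))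
    + (\<Sum>a\<in>Phi. Poly_Mapping.single a (pconst (x (Inr a)) * C3 a (hpart y))
        + (\<Sum>b\<in>Phi. Poly_Mapping.single (a + b) (pconst (x (Inr a)) * (pconst (of_int (epsQ a b)) * (pconst (y (Inr b)) * Ek a b)))))"
    by (simp add: heis_Vv emode_Vv vscale_add vscale_sum vscale_single C3_def Ek_def)
  also have "\<dots> = Psi (\<lambda>k l. x k * y l)"
    by (simp add: Psi_def sum.distrib Lk_mult Lk_mult_const Lk_scale C3_scale pconst_mult hpart_def mult_ac add_ac)
  finally show ?thesis .
qed

lemma Psi_add: "Psi (\<lambda>k l. M k l + N k l) = Psi M + Psi N"
  by (simp add: Psi_def QF_add Lk_add C3_add single_add sum.distrib distrib_left distrib_right pconst_add add_ac)

lemma Psi_zero: "Psi (\<lambda>k l. 0) = 0"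
  by (simp add: Psi_def)

lemma Psi_sum: "Psi (\<lambda>k l. \<Sum>i\<in>A. f i k l) = (\<Sum>i\<in>A. Psi (f i))"
proof (induction A rule: infinite_finite_induct)
  case (infinite A) then show ?case by (simp add: Psi_zero)
next
  case empty then show ?case by (simp add: Psi_zero)
next
  case (insert i A)
  then show ?case by (simp add: Psi_add)
qed


definition lamE :: "idx \<Rightarrow> idx \<Rightarrow> complex" where
  "lamE r s = (case r of
     I1 \<Rightarrow> (case s of I1 \<Rightarrow> (4/3) | I2 \<Rightarrow> 1 | I3 \<Rightarrow> (5/3) | I4 \<Rightarrow> 2 | I5 \<Rightarrow> (4/3) | I6 \<Rightarrow> (2/3)) |
     I2 \<Rightarrow> (case s of I1 \<Rightarrow> 1 | I2 \<Rightarrow> 2 | I3 \<Rightarrow> 2 | I4 \<Rightarrow> 3 | I5 \<Rightarrow> 2 | I6 \<Rightarrow> 1) |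
     I3 \<Rightarrow> (case s of I1 \<Rightarrow> (5/3) | I2 \<Rightarrow> 2 | I3 \<Rightarrow> (10/3) | I4 \<Rightarrow> 4 | I5 \<Rightarrow> (8/3) | I6 \<Rightarrow> (4/3)) |
     I4 \<Rightarrow> (case s of I1 \<Rightarrow> 2 | I2 \<Rightarrow> 3 | I3 \<Rightarrow> 4 | I4 \<Rightarrow> 6 | I5 \<Rightarrow> 4 | I6 \<Rightarrow> 2) |
     I5 \<Rightarrow> (case s of I1 \<Rightarrow> (4/3) | I2 \<Rightarrow> 2 | I3 \<Rightarrow> (8/3) | I4 \<Rightarrow> 4 | I5 \<Rightarrow> (10/3) | I6 \<Rightarrow> (5/3)) |
     I6 \<Rightarrow> (case s of I1 \<Rightarrow> (2/3) | I2 \<Rightarrow> 1 | I3 \<Rightarrow> (4/3) | I4 \<Rightarrow> 2 | I5 \<Rightarrow> (5/3) | I6 \<Rightarrow> (4/3)))"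

definition Pm :: "idx \<Rightarrow> idx \<Rightarrow> complex" where
  "Pm r s = (lamE r s + lamE (tauI r) s) / 2"

lemma hform_Pm: "hform h (\<lambda>s. Pm r s) = (h r + h (tauI r)) / 2"
  by (cases r) (simp_all add: hform_expand Pm_def lamE_def field_simps)

lemma Pm_tau: "Pm r (tauI s) = Pm r s"
  by (cases r; cases s) (simp_all add: Pm_def lamE_def)

lemma sum_fun_apply: "(\<Sum>i\<in>A. f i) x = (\<Sum>i\<in>A. f i x)"
  by (induction A rule: infinite_finite_induct) simp_all

lemma gsmult_apply[simp]: "gsmult c x k = c * x k" by (simp add: gsmult_def)

lemma hform_add1: "hform (\<lambda>s. f s + g s) h = hform f h + hform g h"
  by (simp add: hform_def distrib_left distrib_right sum.distrib)
lemma hform_scale1: "hform (\<lambda>s. c * f s) h = c * hform f h"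
  by (simp add: hform_def sum_distrib_left mult_ac)
lemma hform_sym: "hform f g = hform g f"
  by (simp add: hform_expand algebra_simps)

lemma gform_add1: "gform (\<lambda>k. x k + z k) y = gform x y + gform z y"
  by (simp add: gform_def hpart_def hform_add1 distrib_right sum.distrib)
lemma gform_scale1: "gform (\<lambda>k. c * x k) y = c * gform x y"
  by (simp add: gform_def hpart_def hform_scale1 distrib_left sum_distrib_left mult_ac)
lemma gform_zero1: "gform (\<lambda>k. 0) y = 0"
  by (simp add: gform_def hpart_def hform_def)
lemma gform_sum1: "gform (\<lambda>k. \<Sum>i\<in>A. f i k) y = (\<Sum>i\<in>A. gform (f i) y)"
proof (induction A rule: infinite_finite_induct)
  case (insert i A) then show ?case by (simp add: gform_add1)
qed (simp_all add: gform_zero1)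

lemma sum_Phi_neg: "(\<Sum>a\<in>Phi. f a) = (\<Sum>a\<in>Phi. f (- a))"
  by (rule sum.reindex_bij_witness[of _ uminus uminus]) (auto simp: Phi_uminus)

lemma gform_sym: "gform x y = gform y x"
proof -
  have "(\<Sum>a\<in>Phi. x (Inr a) * y (Inr (- a)) * of_int (epsQ a (- a)))
      = (\<Sum>a\<in>Phi. x (Inr (- a)) * y (Inr (- (- a))) * of_int (epsQ (- a) (- (- a))))"
    by (rule sum_Phi_neg)
  also have "\<dots> = (\<Sum>a\<in>Phi. y (Inr a) * x (Inr (- a)) * of_int (epsQ a (- a)))"
    by (simp add: eps_neg_sym mult_ac)
  finally show ?thesis by (simp add: gform_def hform_sym)
qed

lemma gform_diff2: "gform x (\<lambda>k. y k - z k) = gform x y - gform x z"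
proof -
  have "gform (\<lambda>k. y k - z k) x = gform (\<lambda>k. y k + (-1) * z k) x" by simp
  also have "\<dots> = gform y x + (-1) * gform z x" by (simp only: gform_add1 gform_scale1)
  finally show ?thesis by (simp add: gform_sym)
qed

lemma in_a_tau_Inl: "in_a x \<Longrightarrow> x (Inl (tauI i)) = x (Inl i)"
  unfolding in_a_def tauG_def by (metis (no_types, lifting) old.sum.simps(5))
lemma in_a_tau_Inr: "in_a x \<Longrightarrow> x (Inr (tauQ a)) = x (Inr a)"
  unfolding in_a_def tauG_def by (metis (no_types, lifting) old.sum.simps(6))
lemma in_a_Phi: "in_a x \<Longrightarrow> a \<notin> Phi \<Longrightarrow> x (Inr a) = 0"
  by (simp add: in_a_def in_g_def)

lemma in_aI: assumes "\<And>a. a \<notin> Phi \<Longrightarrow> x (Inr a) = 0" "\<And>i. x (Inl (tauI i)) = x (Inl i)"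
   "\<And>a. x (Inr (tauQ a)) = x (Inr a)" shows "in_a x"
  unfolding in_a_def in_g_def tauG_def using assms by (auto simp: fun_eq_iff split: sum.split)

lemma in_a_lincomb: "(\<And>i. i \<in> A \<Longrightarrow> in_a (v i)) \<Longrightarrow> in_a (\<lambda>l. \<Sum>i\<in>A. c i * v i l)"
  by (rule in_aI) (simp_all add: in_a_Phi in_a_tau_Inl in_a_tau_Inr)

lemma in_a_diff: "in_a x \<Longrightarrow> in_a y \<Longrightarrow> in_a (\<lambda>l. x l - y l)"
  by (rule in_aI) (simp_all add: in_a_Phi in_a_tau_Inl in_a_tau_Inr)

context
  fixes d :: nat and u u' :: "nat \<Rightarrow> gel"
  assumes B: "is_basis_a d u" and D: "is_dual_basis_a d u u'"
begin

lemma expand: assumes "in_a x" shows "x = (\<lambda>k. \<Sum>i<d. gform x (u' i) * u i k)"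
proof -
  obtain c where c: "x = (\<Sum>i<d. gsmult (c i) (u i))" using B assms unfolding is_basis_a_def by blast
  then have xc: "x = (\<lambda>k. \<Sum>i<d. c i * u i k)" by (simp add: fun_eq_iff sum_fun_apply)
  have "gform x (u' j) = c j" if "j < d" for j
  proof -
    have "gform x (u' j) = (\<Sum>i<d. gform (\<lambda>k. c i * u i k) (u' j))"
      unfolding xc by (rule gform_sum1)
    also have "\<dots> = (\<Sum>i<d. c i * (if i = j then 1 else 0))"
      using D that by (intro sum.cong) (auto simp: gform_scale1 is_dual_basis_a_def)
    also have "\<dots> = c j" using that by (simp add: if_distrib sum.delta cong: if_cong)
    finally show ?thesis .
  qed
  then show ?thesis by (subst xc) (simp add: fun_eq_iff)
qed

lemma orth_zero: assumes "in_a z" "\<And>x. in_a x \<Longrightarrow> gform x z = 0" shows "z = (\<lambda>k. 0)"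
proof -
  have "gform z (u' i) = 0" if "i < d" for i
    using assms(2)[of "u' i"] D that by (simp add: gform_sym is_dual_basis_a_def)
  then show ?thesis using expand[OF assms(1)] by simp
qed

lemma M_eq_Dstar:
  assumes DS: "in_a Dk" "\<And>x. in_a x \<Longrightarrow> gform x Dk = x k"
  shows "(\<lambda>l. \<Sum>i<d. u i k * u' i l) = Dk"
proof -
  let ?M = "\<lambda>l. \<Sum>i<d. u i k * u' i l"
  have inM: "in_a ?M" by (rule in_a_lincomb) (use D in \<open>auto simp: is_dual_basis_a_def\<close>)
  have gM: "gform x ?M = x k" if "in_a x" for x
  proof -
    have "gform x ?M = gform ?M x" by (rule gform_sym)
    also have "\<dots> = (\<Sum>i<d. u i k * gform (u' i) x)"
      by (simp add: gform_sum1 gform_scale1)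
    also have "\<dots> = (\<Sum>i<d. gform x (u' i) * u i k)"
      by (simp add: gform_sym mult.commute)
    also have "\<dots> = x k" using fun_cong[OF expand[OF that], of k] by simp
    finally show ?thesis .
  qed
  have "(\<lambda>l. ?M l - Dk l) = (\<lambda>k. 0)"
    by (rule orth_zero) (auto intro: in_a_diff inM DS simp: gform_diff2 gM DS)
  then show ?thesis by (simp add: fun_eq_iff)
qed

end


definition eD :: "rlat \<Rightarrow> complex" where "eD a = of_int (epsQ a (- a))"

lemma eD_sq: "eD a * eD a = 1"
  using eps_pm[of a] by (auto simp: eD_def)

lemma eD_tau: "eD (tauQ a) = eD a"
  by (simp add: eD_def eps_tau_neg)

definition Dstar :: "idx + rlat \<Rightarrow> gel" where
  "Dstar k = (case k of Inl r \<Rightarrow> (\<lambda>l. case l of Inl s \<Rightarrow> Pm r s | Inr _ \<Rightarrow> 0)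
     | Inr a \<Rightarrow> (\<lambda>l. case l of Inl _ \<Rightarrow> 0 | Inr b \<Rightarrow>
          (if a \<in> Phi then eD a / 2 * ((if b = - a then 1 else 0) + (if b = - tauQ a then 1 else 0)) else 0)))"

lemma Dstar_simps[simp]:
  "Dstar (Inl r) (Inl s) = Pm r s" "Dstar (Inl r) (Inr b) = 0" "Dstar (Inr a) (Inl s) = 0"
  "Dstar (Inr a) (Inr b) = (if a \<in> Phi then eD a / 2 * ((if b = - a then 1 else 0) + (if b = - tauQ a then 1 else 0)) else 0)"
  by (simp_all add: Dstar_def)

lemma tauQ_eq_neg: "tauQ b = - a \<longleftrightarrow> b = - tauQ a"
  by (metis tauQ_tauQ tauQ_uminus)

lemma hpart_Dstar_Inr: "hpart (Dstar (Inr a)) = (\<lambda>s. 0)"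
  by (simp add: hpart_def fun_eq_iff)

lemma in_a_Dstar: "in_a (Dstar k)"
proof (cases k)
  case (Inl r)
  show ?thesis unfolding Inl by (rule in_aI) (simp_all add: Pm_tau)
next
  case (Inr a)
  show ?thesis unfolding Inr
  proof (rule in_aI)
    fix b assume "b \<notin> Phi"
    then show "Dstar (Inr a) (Inr b) = 0" using Phi_uminus Phi_tau by auto
  next
    fix i show "Dstar (Inr a) (Inl (tauI i)) = Dstar (Inr a) (Inl i)" by simp
  next
    fix b show "Dstar (Inr a) (Inr (tauQ b)) = Dstar (Inr a) (Inr b)"
      by (simp add: tauQ_eq_neg add.commute)
  qed
qed

lemma gform_Dstar: assumes "in_a x" shows "gform x (Dstar k) = x k"
proof (cases k)
  case (Inl r)
  have "hpart (Dstar (Inl r)) = (\<lambda>s. Pm r s)" by (simp add: hpart_def fun_eq_iff)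
  then have "gform x (Dstar k) = hform (hpart x) (\<lambda>s. Pm r s)"
    by (simp add: gform_def Inl)
  also have "\<dots> = x (Inl r)" using in_a_tau_Inl[OF assms, of r]
    by (simp add: hform_Pm hpart_def)
  finally show ?thesis using Inl by simp
next
  case (Inr a)
  show ?thesis
  proof (cases "a \<in> Phi")
    case False
    then show ?thesis using in_a_Phi[OF assms False]
      by (simp add: gform_def Inr hpart_Dstar_Inr)
  next
    case True
    let ?f = "\<lambda>c. x (Inr c) * (eD a / 2) * of_int (epsQ c (- c))"
    have "(\<Sum>c\<in>Phi. x (Inr c) * Dstar (Inr a) (Inr (- c)) * of_int (epsQ c (- c)))
        = (\<Sum>c\<in>Phi. (if c = a then ?f c else 0) + (if c = tauQ a then ?f c else 0))"
      by (rule sum.cong) (auto simp: True algebra_simps)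
    also have "\<dots> = ?f a + ?f (tauQ a)"
      by (simp add: sum.distrib sum.delta finite_Phi True Phi_tau)
    also have "\<dots> = x (Inr a)"
      using in_a_tau_Inr[OF assms, of a] eD_sq[of a] eD_tau[of a]
      by (simp add: eD_def[symmetric] field_simps)
    finally show ?thesis by (simp add: gform_def Inr hpart_Dstar_Inr)
  qed
qed

theorem W_eq:
  assumes "is_basis_a d u" "is_dual_basis_a d u u'"
  shows "(\<Sum>i<d. gmode (u i) (-1) (gmode (u' i) (-1) vac)) = Psi (\<lambda>k l. Dstar k l)"
proof -
  have M: "(\<lambda>l. \<Sum>i<d. u i k * u' i l) = Dstar k" for k
    by (rule M_eq_Dstar[OF assms in_a_Dstar gform_Dstar])
  have "(\<Sum>i<d. gmode (u i) (-1) (gmode (u' i) (-1) vac)) = (\<Sum>i<d. Psi (\<lambda>k l. u i k * u' i l))"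
    by (simp add: B_Psi)
  also have "\<dots> = Psi (\<lambda>k l. \<Sum>i<d. u i k * u' i l)" by (rule Psi_sum[symmetric])
  also have "\<dots> = Psi (\<lambda>k l. Dstar k l)" using M by (simp add: fun_eq_iff)
  finally show ?thesis .
qed

lemma lform_uminus2: "lform a (- b) = - lform a b"
  by (simp add: lform_expand)

lemma Psi4_a: assumes a: "a \<in> Phi"
  shows "(\<Sum>b\<in>Phi. Poly_Mapping.single (a + b) (pconst (of_int (epsQ a b) * Dstar (Inr a) (Inr b)) * Ek a b))
   = Poly_Mapping.single 0 (pconst (1/2) * Em (toH a) 2 1)
     + Poly_Mapping.single (a - tauQ a) (pconst (of_int (epsQ a (- tauQ a)) * eD a / 2) * Ek a (- tauQ a))"
proof -
  let ?g = "\<lambda>b. Poly_Mapping.single (a + b) (pconst (of_int (epsQ a b) * (eD a / 2)) * Ek a b)"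
  have "(\<Sum>b\<in>Phi. Poly_Mapping.single (a + b) (pconst (of_int (epsQ a b) * Dstar (Inr a) (Inr b)) * Ek a b))
     = (\<Sum>b\<in>Phi. (if b = - a then ?g b else 0) + (if b = - tauQ a then ?g b else 0))"
    by (rule sum.cong) (auto simp: a distrib_left pconst_add distrib_right single_add)
  also have "\<dots> = ?g (- a) + ?g (- tauQ a)"
    by (simp add: sum.distrib sum.delta finite_Phi a Phi_tau Phi_uminus)
  also have "?g (- a) = Poly_Mapping.single 0 (pconst (1/2) * Em (toH a) 2 1)"
    using a eD_sq[of a] by (simp add: eD_def[symmetric] Ek_def lform_uminus2 Phi_def)
  also have "?g (- tauQ a) = Poly_Mapping.single (a - tauQ a) (pconst (of_int (epsQ a (- tauQ a)) * eD a / 2) * Ek a (- tauQ a))"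
    by simp
  finally show ?thesis .
qed

lemma Psi_Dstar: "Psi (\<lambda>k l. Dstar k l) = Poly_Mapping.single 0 (QF Pm)
   + (\<Sum>a\<in>Phi. Poly_Mapping.single 0 (pconst (1/2) * Em (toH a) 2 1)
     + Poly_Mapping.single (a - tauQ a) (pconst (of_int (epsQ a (- tauQ a)) * eD a / 2) * Ek a (- tauQ a)))"
proof -
  have "(\<Sum>a\<in>Phi. \<Sum>b\<in>Phi. Poly_Mapping.single (a + b) (pconst (of_int (epsQ a b) * Dstar (Inr a) (Inr b)) * Ek a b))
    = (\<Sum>a\<in>Phi. Poly_Mapping.single 0 (pconst (1/2) * Em (toH a) 2 1)
     + Poly_Mapping.single (a - tauQ a) (pconst (of_int (epsQ a (- tauQ a)) * eD a / 2) * Ek a (- tauQ a)))"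
    by (rule sum.cong[OF refl]) (rule Psi4_a)
  then show ?thesis by (simp add: Psi_def del: Dstar_simps(4))
qed


definition NSt :: "idx \<Rightarrow> idx \<Rightarrow> complex" where
  "NSt r s = (case r of
     I1 \<Rightarrow> (case s of I1 \<Rightarrow> 11 | I2 \<Rightarrow> 9 | I3 \<Rightarrow> (29/2) | I4 \<Rightarrow> 18 | I5 \<Rightarrow> (25/2) | I6 \<Rightarrow> 7) |
     I2 \<Rightarrow> (case s of I1 \<Rightarrow> 9 | I2 \<Rightarrow> 18 | I3 \<Rightarrow> 18 | I4 \<Rightarrow> 27 | I5 \<Rightarrow> 18 | I6 \<Rightarrow> 9) |
     I3 \<Rightarrow> (case s of I1 \<Rightarrow> (29/2) | I2 \<Rightarrow> 18 | I3 \<Rightarrow> 29 | I4 \<Rightarrow> 36 | I5 \<Rightarrow> 25 | I6 \<Rightarrow> (25/2)) |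
     I4 \<Rightarrow> (case s of I1 \<Rightarrow> 18 | I2 \<Rightarrow> 27 | I3 \<Rightarrow> 36 | I4 \<Rightarrow> 54 | I5 \<Rightarrow> 36 | I6 \<Rightarrow> 18) |
     I5 \<Rightarrow> (case s of I1 \<Rightarrow> (25/2) | I2 \<Rightarrow> 18 | I3 \<Rightarrow> 25 | I4 \<Rightarrow> 36 | I5 \<Rightarrow> 29 | I6 \<Rightarrow> (29/2)) |
     I6 \<Rightarrow> (case s of I1 \<Rightarrow> 7 | I2 \<Rightarrow> 9 | I3 \<Rightarrow> (25/2) | I4 \<Rightarrow> 18 | I5 \<Rightarrow> (29/2) | I6 \<Rightarrow> 11))"

lemma lamE_dual: "hform (\<lambda>s. lamE i s) (alphaH j) = (if j = i then 1 else 0)"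
  by (cases i; cases j) (simp_all add: hform_expand alphaH_apply lamE_def)

lemma recon: "h s = (\<Sum>j\<in>idxs. hform h (alphaH j) * lamE j s)"
  by (cases s) (simp_all add: sum_idxs hform_expand alphaH_apply lamE_def field_simps)

lemma lam_eq: "lam i = (\<lambda>s. lamE i s)"
  unfolding lam_def
proof (rule the_equality)
  show "\<forall>j\<in>idxs. hform (\<lambda>s. lamE i s) (alphaH j) = (if j = i then 1 else 0)"
    by (simp add: lamE_dual)
next
  fix h assume h: "\<forall>j\<in>idxs. hform h (alphaH j) = (if j = i then 1 else 0)"
  show "h = (\<lambda>s. lamE i s)"
  proof
    fix s
    have "h s = (\<Sum>j\<in>idxs. hform h (alphaH j) * lamE j s)" by (rule recon)
    also have "\<dots> = (\<Sum>j\<in>idxs. (if j = i then lamE j s else 0))"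
      using h by (intro sum.cong) auto
    also have "\<dots> = lamE i s" by (cases i) (simp_all add: sum_idxs)
    finally show "h s = lamE i s" .
  qed
qed


lemma heis_single0: "heis h (-1) (Poly_Mapping.single 0 p) = Poly_Mapping.single 0 (Lk h 0 * p)"
proof -
  have "heis h (-1) (Poly_Mapping.single 0 p) = (\<Sum>b\<in>{0}. Poly_Mapping.single b (Lk h 0 * lk (Poly_Mapping.single 0 p) b))"
    unfolding heis_neg1 by (rule vmap_superset) auto
  then show ?thesis by simp
qed

lemma QF_scale: "pconst c * QF f = QF (\<lambda>r s. c * f r s)"
  by (simp add: QF_def sum_distrib_left pconst_mult mult.assoc)
lemma QF_sum: "QF (\<lambda>r s. \<Sum>i\<in>A. f i r s) = (\<Sum>i\<in>A. QF (f i))"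
  by (induction A rule: infinite_finite_induct) (simp_all add: QF_add)
lemma QF_diff: "QF (\<lambda>r s. f r s - g r s) = QF f - QF g"
proof -
  have "QF (\<lambda>r s. f r s - g r s) + QF g = QF f"
    by (simp add: QF_add[symmetric])
  then show ?thesis by (simp add: eq_diff_eq)
qed

lemma QF_swap: "QF f = QF (\<lambda>r s. f s r)"
  unfolding QF_def by (subst sum.swap) (simp add: mult.commute)

lemma QF_symz: "QF f = QF (\<lambda>r s. (f r s + f s r) / 2)"
proof -
  have "QF (\<lambda>r s. (f r s + f s r) / 2) = QF (\<lambda>r s. f r s / 2) + QF (\<lambda>r s. f s r / 2)"
    by (simp add: QF_add[symmetric] add_divide_distrib)
  also have "QF (\<lambda>r s. f s r / 2) = QF (\<lambda>r s. f r s / 2)"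
    by (rule QF_swap[symmetric])
  also have "QF (\<lambda>r s. f r s / 2) + QF (\<lambda>r s. f r s / 2) = QF (\<lambda>r s. f r s / 2 + f r s / 2)"
    by (rule QF_add[symmetric])
  also have "(\<lambda>r s. f r s / 2 + f r s / 2) = f" by (simp add: fun_eq_iff)
  finally show ?thesis by simp
qed

lemma QF_eq_sym: assumes "\<And>r s. f r s + f s r = g r s + g s r" shows "QF f = QF g"
  by (subst QF_symz, subst (2) QF_symz) (simp add: assms)

lemma zero_rlat: "(\<lambda>a. 0) = (0::rlat)" by (simp add: fun_eq_iff)

lemma omegaE6_val: "omegaE6 = Poly_Mapping.single 0 (QF (\<lambda>r s. lamE r s / 2))"
proof -
  have "(\<Sum>i\<in>idxs. heis (alphaH i) (-1) (heis (lam i) (-1) vac))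
      = Poly_Mapping.single 0 (QF (\<lambda>r s. \<Sum>i\<in>idxs. alphaH i r * lamE i s))"
    by (simp add: heis_vac heis_single0 Lk_mult lam_eq QF_sum single_sum)
  also have "(\<lambda>r s. \<Sum>i\<in>idxs. alphaH i r * lamE i s) = (\<lambda>r s. lamE r s)"
  proof (intro ext)
    fix r s show "(\<Sum>i\<in>idxs. alphaH i r * lamE i s) = lamE r s"
      by (cases r) (simp_all add: sum_idxs alphaH_apply)
  qed
  finally show ?thesis
    by (simp add: omegaE6_def vscale_single QF_scale zero_rlat)
qed


definition gv :: "rlat \<Rightarrow> fock" where
  "gv a = pconst (of_int (epsQ a (- tauQ a)) * eD a / 2) * Ek a (- tauQ a)"

definition cc :: "rlat \<Rightarrow> complex" where "cc a = (if tauQ a = a then 1 else 1/2)"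

definition scal :: "rlat \<Rightarrow> complex" where
  "scal k = (\<Sum>a\<in>Phi. if a - tauQ a = k then of_int (epsQ a (- tauQ a)) * eD a / 2 else 0)"

lemma lk_PsiD: "lk (Psi (\<lambda>k l. Dstar k l)) k =
   (if k = 0 then QF Pm + (\<Sum>a\<in>Phi. pconst (1/2) * Em (toH a) 2 1) else 0)
   + (\<Sum>a\<in>Phi. if a - tauQ a = k then gv a else 0)"
  unfolding Psi_Dstar gv_def
  by (simp add: lookup_add lookup_sum lookup_single when_def sum.distrib)

lemma num_lform_tau: "\<forall>a\<in>Phi. tauQ a \<noteq> a \<longrightarrow> lform a (tauQ a) = 0"
  unfolding Phi_eq Rl_def by (simp add: lform_expand)

lemma num_diffs: "\<forall>a\<in>Phi. a - tauQ a \<in> {0, v6 1 0 0 0 0 (-1), v6 (-1) 0 0 0 0 1, v6 0 0 1 0 (-1) 0, v6 0 0 (-1) 0 1 0,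
   v6 1 0 1 0 (-1) (-1), v6 (-1) 0 (-1) 0 1 1}"
  unfolding Phi_eq Rl_def by simp

lemma sum_key0: "(\<Sum>a\<in>Phi. if a - tauQ a = 0 then gv a else 0) = (\<Sum>a\<in>Phi. if tauQ a = a then pconst (1/2) * Em (toH a) 2 1 else 0)"
proof (rule sum.cong[OF refl])
  fix a assume a: "a \<in> Phi"
  have l: "lform a a = 2" using a by (simp add: Phi_def)
  show "(if a - tauQ a = 0 then gv a else 0) = (if tauQ a = a then pconst (1/2) * Em (toH a) 2 1 else 0)"
  proof (cases "tauQ a = a")
    case True
    have "gv a = pconst (1/2) * Em (toH a) 2 1"
      using eD_sq[of a] True l by (simp add: gv_def eD_def[symmetric] Ek_def lform_uminus2)
    then show ?thesis using True by simp
  next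
    case False
    then have "a - tauQ a \<noteq> 0" by simp
    then show ?thesis using False by simp
  qed
qed

lemma sum_keyk: assumes "k \<noteq> 0" shows "(\<Sum>a\<in>Phi. if a - tauQ a = k then gv a else 0) = pconst (scal k)"
  unfolding scal_def pconst_sum
proof (rule sum.cong[OF refl])
  fix a assume a: "a \<in> Phi"
  show "(if a - tauQ a = k then gv a else 0) = pconst (if a - tauQ a = k then of_int (epsQ a (- tauQ a)) * eD a / 2 else 0)"
  proof (cases "a - tauQ a = k")
    case True
    then have "tauQ a \<noteq> a" using assms by auto
    then have "lform a (tauQ a) = 0" using num_lform_tau a by blast
    then show ?thesis using True by (simp add: gv_def Ek_def lform_uminus2)
  qed simp
qed

lemma Em2_expand: "pconst w * Em (toH a) 2 1 = QF (\<lambda>r s. w / 2 * (toH a r * toH a s)) + Lk (\<lambda>r. w / 2 * toH a r) 1"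
  by (simp add: Em_2 Lk_mult QF_scale Lk_scale distrib_left mult.assoc[symmetric] pconst_mult[symmetric])

lemma key0_sum: "(\<Sum>a\<in>Phi. pconst (1/2) * Em (toH a) 2 1) + (\<Sum>a\<in>Phi. if tauQ a = a then pconst (1/2) * Em (toH a) 2 1 else 0)
   = QF (\<lambda>r s. \<Sum>a\<in>Phi. cc a / 2 * (toH a r * toH a s)) + Lk (\<lambda>r. \<Sum>a\<in>Phi. cc a / 2 * toH a r) 1"
proof -
  have "(\<Sum>a\<in>Phi. pconst (1/2) * Em (toH a) 2 1) + (\<Sum>a\<in>Phi. if tauQ a = a then pconst (1/2) * Em (toH a) 2 1 else 0)
     = (\<Sum>a\<in>Phi. pconst (cc a) * Em (toH a) 2 1)"
  proof -
    have h: "pconst (1/2) * E + pconst (1/2) * E = (E::fock)" for E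
      by (simp only: distrib_right[symmetric] pconst_add[symmetric]) simp
    show ?thesis
      by (subst sum.distrib[symmetric], rule sum.cong[OF refl]) (simp add: cc_def h)
  qed
  also have "\<dots> = (\<Sum>a\<in>Phi. QF (\<lambda>r s. cc a / 2 * (toH a r * toH a s)) + Lk (\<lambda>r. cc a / 2 * toH a r) 1)"
    by (simp add: Em2_expand)
  also have "\<dots> = QF (\<lambda>r s. \<Sum>a\<in>Phi. cc a / 2 * (toH a r * toH a s)) + Lk (\<lambda>r. \<Sum>a\<in>Phi. cc a / 2 * toH a r) 1"
    by (simp add: sum.distrib QF_sum Lk_sum)
  finally show ?thesis .
qed

lemma num_NL: "(\<lambda>r. \<Sum>a\<in>Phi. cc a / 2 * toH a r) = (\<lambda>r. 0)"
proof
  fix r show "(\<Sum>a\<in>Phi. cc a / 2 * toH a r) = 0"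
    unfolding sum_Phi Rl_def by (cases r) (simp_all add: cc_def toH_def)
qed

lemma num_NS: "(\<lambda>r s. \<Sum>a\<in>Phi. cc a / 2 * (toH a r * toH a s)) = NSt"
proof (intro ext)
  fix r s show "(\<Sum>a\<in>Phi. cc a / 2 * (toH a r * toH a s)) = NSt r s"
    unfolding sum_Phi Rl_def by (cases r; cases s) (simp_all add: cc_def toH_def NSt_def)
qed


lemma alphaQ_v6: "alphaQ I1 = v6 1 0 0 0 0 0" "alphaQ I2 = v6 0 1 0 0 0 0" "alphaQ I3 = v6 0 0 1 0 0 0"
  "alphaQ I4 = v6 0 0 0 1 0 0" "alphaQ I5 = v6 0 0 0 0 1 0" "alphaQ I6 = v6 0 0 0 0 0 1"
  by (simp_all add: alphaQ_def v6_def fun_eq_iff split: idx.split)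

lemma v6_eq0_iff[simp]: "v6 a b c d e f = 0 \<longleftrightarrow> a = 0 \<and> b = 0 \<and> c = 0 \<and> d = 0 \<and> e = 0 \<and> f = 0"
  "0 = v6 a b c d e f \<longleftrightarrow> a = 0 \<and> b = 0 \<and> c = 0 \<and> d = 0 \<and> e = 0 \<and> f = 0"
  by (auto simp: zero_v6)

lemma heis2_vac: "heis h (-1) (heis h (-1) vac) = Poly_Mapping.single 0 (QF (\<lambda>r s. h r * h s))"
  by (simp add: heis_vac heis_single0 Lk_mult)

lemma scal_vals:
  "scal (v6 1 0 0 0 0 (-1)) = 4" "scal (v6 (-1) 0 0 0 0 1) = 4"
  "scal (v6 0 0 1 0 (-1) 0) = 4" "scal (v6 0 0 (-1) 0 1 0) = 4"
  "scal (v6 1 0 1 0 (-1) (-1)) = -4" "scal (v6 (-1) 0 (-1) 0 1 1) = -4"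
  unfolding scal_def sum_Phi Rl_def by (simp_all add: epsQ_expand sg_def eD_def)

lemma scal_other: assumes "k \<notin> {0, v6 1 0 0 0 0 (-1), v6 (-1) 0 0 0 0 1, v6 0 0 1 0 (-1) 0, v6 0 0 (-1) 0 1 0,
   v6 1 0 1 0 (-1) (-1), v6 (-1) 0 (-1) 0 1 1}" shows "scal k = 0"
  unfolding scal_def
proof (rule sum.neutral, intro ballI)
  fix a assume "a \<in> Phi"
  then have "a - tauQ a \<noteq> k" using num_diffs assms by blast
  then show "(if a - tauQ a = k then of_int (epsQ a (- tauQ a)) * eD a / 2 else 0) = 0" by simp
qed

theorem theorem5p2:
  fixes d :: nat and u u' :: "nat \<Rightarrow> gel"
  assumes "is_basis_a d u" and "is_dual_basis_a d u u'"
  shows "omegaE6 - omegaF4 d u u' =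
      vscale (1/10)
        (heis (- lam I1 + lam I6) (-1) (heis (- lam I1 + lam I6) (-1) vac)
       + heis (lam I3 - lam I5) (-1) (heis (lam I3 - lam I5) (-1) vac)
       + heis (lam I1 - lam I3 + lam I5 - lam I6) (-1)
              (heis (lam I1 - lam I3 + lam I5 - lam I6) (-1) vac))
    + vscale (1/5)
        (- tens 1 (alphaQ I1 - alphaQ I6) - tens 1 (alphaQ I3 - alphaQ I5)
         + tens 1 (alphaQ I1 + alphaQ I3 - alphaQ I5 - alphaQ I6))
    + vscale (1/5)
        (- tens 1 (- alphaQ I1 + alphaQ I6) - tens 1 (- alphaQ I3 + alphaQ I5)
         + tens 1 (- alphaQ I1 - alphaQ I3 + alphaQ I5 + alphaQ I6))"
proof -
  have F4: "omegaF4 d u u' = vscale (1/20) (Psi (\<lambda>k l. Dstar k l))"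
    unfolding omegaF4_def using W_eq[OF assms] by simp
  have PD0: "lk (Psi (\<lambda>k l. Dstar k l)) 0 = QF Pm + QF NSt"
  proof -
    have "lk (Psi (\<lambda>k l. Dstar k l)) 0 = QF Pm + (\<Sum>a\<in>Phi. pconst (1/2) * Em (toH a) 2 1) + (\<Sum>a\<in>Phi. if a - tauQ a = 0 then gv a else 0)"
      unfolding lk_PsiD by simp
    also have "\<dots> = QF Pm + QF NSt"
      unfolding sum_key0 add.assoc key0_sum num_NL num_NS by simp
    finally show ?thesis .
  qed
  have PDk: "lk (Psi (\<lambda>k l. Dstar k l)) k = pconst (scal k)" if "k \<noteq> 0" for k
    using that by (simp add: lk_PsiD sum_keyk)
  show ?thesis
  proof (rule poly_mapping_eqI)
    fix k
    have L: "lk (omegaE6 - omegaF4 d u u') k = lk omegaE6 k - pconst (1/20) * lk (Psi (\<lambda>k l. Dstar k l)) k"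
      by (simp add: F4 lookup_minus lookup_vscale)
    show "lk (omegaE6 - omegaF4 d u u') k = lk (vscale (1/10)
        (heis (- lam I1 + lam I6) (-1) (heis (- lam I1 + lam I6) (-1) vac)
       + heis (lam I3 - lam I5) (-1) (heis (lam I3 - lam I5) (-1) vac)
       + heis (lam I1 - lam I3 + lam I5 - lam I6) (-1)
              (heis (lam I1 - lam I3 + lam I5 - lam I6) (-1) vac))
    + vscale (1/5)
        (- tens 1 (alphaQ I1 - alphaQ I6) - tens 1 (alphaQ I3 - alphaQ I5)
         + tens 1 (alphaQ I1 + alphaQ I3 - alphaQ I5 - alphaQ I6))
    + vscale (1/5)
        (- tens 1 (- alphaQ I1 + alphaQ I6) - tens 1 (- alphaQ I3 + alphaQ I5)
         + tens 1 (- alphaQ I1 - alphaQ I3 + alphaQ I5 + alphaQ I6))) k"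
    proof (cases "k = 0")
      case True
      have "lk (omegaE6 - omegaF4 d u u') k = QF (\<lambda>r s. lamE r s / 2) - pconst (1/20) * (QF Pm + QF NSt)"
        unfolding L using True PD0 by (simp add: omegaE6_val)
      also have "\<dots> = lk (vscale (1/10)
        (heis (- lam I1 + lam I6) (-1) (heis (- lam I1 + lam I6) (-1) vac)
       + heis (lam I3 - lam I5) (-1) (heis (lam I3 - lam I5) (-1) vac)
       + heis (lam I1 - lam I3 + lam I5 - lam I6) (-1)
              (heis (lam I1 - lam I3 + lam I5 - lam I6) (-1) vac))
    + vscale (1/5)
        (- tens 1 (alphaQ I1 - alphaQ I6) - tens 1 (alphaQ I3 - alphaQ I5)
         + tens 1 (alphaQ I1 + alphaQ I3 - alphaQ I5 - alphaQ I6))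
    + vscale (1/5)
        (- tens 1 (- alphaQ I1 + alphaQ I6) - tens 1 (- alphaQ I3 + alphaQ I5)
         + tens 1 (- alphaQ I1 - alphaQ I3 + alphaQ I5 + alphaQ I6))) k"
        unfolding True
        apply (simp add: lookup_add lookup_minus lookup_vscale heis2_vac lam_eq alphaQ_v6 tens_def lookup_single QF_scale QF_add[symmetric] QF_diff[symmetric])
        apply (rule QF_eq_sym)
        subgoal for r s by (cases r; cases s) (simp_all add: lamE_def Pm_def NSt_def)
        done
      finally show ?thesis .
    next
      case False
      have L2: "lk (omegaE6 - omegaF4 d u u') k = pconst (- scal k / 20)"
        unfolding L using False PDk[OF False]
        by (simp add: omegaE6_val lookup_single pconst_mult[symmetric] pconst_uminus)
      consider "k = v6 1 0 0 0 0 (-1)" | "k = v6 (-1) 0 0 0 0 1" | "k = v6 0 0 1 0 (-1) 0" | "k = v6 0 0 (-1) 0 1 0"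
        | "k = v6 1 0 1 0 (-1) (-1)" | "k = v6 (-1) 0 (-1) 0 1 1"
        | "k \<notin> {0, v6 1 0 0 0 0 (-1), v6 (-1) 0 0 0 0 1, v6 0 0 1 0 (-1) 0, v6 0 0 (-1) 0 1 0,
   v6 1 0 1 0 (-1) (-1), v6 (-1) 0 (-1) 0 1 1}" using False by blast
      then show ?thesis
      proof cases
        case 7
        then have ne: "v6 1 0 0 0 0 (-1) \<noteq> k" "v6 (-1) 0 0 0 0 1 \<noteq> k" "v6 0 0 1 0 (-1) 0 \<noteq> k"
          "v6 0 0 (-1) 0 1 0 \<noteq> k" "v6 1 0 1 0 (-1) (-1) \<noteq> k" "v6 (-1) 0 (-1) 0 1 1 \<noteq> k" by auto
        show ?thesis unfolding L2 scal_other[OF 7]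
          by (simp add: lookup_add lookup_minus lookup_vscale heis2_vac alphaQ_v6 tens_def lookup_single when_def False ne)
      next
        case 1
        show ?thesis unfolding L2 using 1 by (simp add: scal_vals lookup_add lookup_minus lookup_vscale heis2_vac alphaQ_v6 tens_def lookup_single when_def pconst_uminus)
      next
        case 2
        show ?thesis unfolding L2 using 2 by (simp add: scal_vals lookup_add lookup_minus lookup_vscale heis2_vac alphaQ_v6 tens_def lookup_single when_def pconst_uminus)
      next
        case 3
        show ?thesis unfolding L2 using 3 by (simp add: scal_vals lookup_add lookup_minus lookup_vscale heis2_vac alphaQ_v6 tens_def lookup_single when_def pconst_uminus)
      next
        case 4
        show ?thesis unfolding L2 using 4 by (simp add: scal_vals lookup_add lookup_minus lookup_vscale heis2_vac alphaQ_v6 tens_def lookup_single when_def pconst_uminus)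
      next
        case 5
        show ?thesis unfolding L2 using 5 by (simp add: scal_vals lookup_add lookup_minus lookup_vscale heis2_vac alphaQ_v6 tens_def lookup_single when_def pconst_uminus)
      next
        case 6
        show ?thesis unfolding L2 using 6 by (simp add: scal_vals lookup_add lookup_minus lookup_vscale heis2_vac alphaQ_v6 tens_def lookup_single when_def pconst_uminus)
      qed
    qed
  qed
qed


end
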